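(* In the module $V(\eta;\kappa,c)$, with $(\kappa,c)$ critical, we have $K\bar u_\epsilon=\kappa_\epsilon \bar u_\epsilon$ and $C_1\bar u_\epsilon=c_\epsilon\bar u_\epsilon$ for $\epsilon=+,-$.
   Context: Let $q\in\mathbb{C}$ be nonzero and not a root of unity, and $U=U_q(\mathfrak{sl}_3)$ the algebra generated by $E_1,E_2,F_1,F_2,K_1^{\pm1},K_2^{\pm1}$ with the Jimbo relations. Put $F_3=F_1F_2-qF_2F_1$, $K=K_1K_2^2$, $C_1=F_1E_1+\frac{qK_1+q^{-1}K_1^{-1}}{(q-q^{-1})^2}$. Let $U^+$ be the subalgebra generated by $E_1,E_2$, $\eta:U^+\to\mathbb{C}$ the algebra homomorphism with $\eta(E_1)=\alpha\neq0$, $\eta(E_2)=0$, and $M(\eta)=U\otimes_{U^+}\mathbb{C}v_\eta$ with $xv_\eta=\eta(x)v_\eta$. Write $[k]=\frac{q^k-q^{-k}}{q-q^{-1}}$, $[k]!=[k]\cdots[1]$, $[0]!=1$, $\genfrac{[}{]}{0pt}{}{n}{k}=\frac{[n]!}{[k]![n-k]!}$ for $0\le k\le n$ (0 otherwise). For $n\in\mathbb{Z}_+$, $l\in\mathbb{Z}$, $Q\in\mathbb{C}[K^{\pm1},C_1]$, $u(n,l,Q)=q^{2nl}K_2^l\sum_{k=0}^{n}\sum_{j=0}^{n-k}a_{kj}(n)F_2^{n-k}F_3^kK_2^{2j}K^{-2j-k}Qv_\eta$ with $a_{kj}(n)=(-1)^j\alpha^k(q^2-1)^kq^{j(n-3)}q^{\frac{1}{2}k(2n+2j+k-7)}\genfrac{[}{]}{0pt}{}{n}{k}\genfrac{[}{]}{0pt}{}{n-k}{j}$.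 For $n\in\mathbb{N}$, $h_n(K,C_1)=q^{3-2n}K+q^{2n-3}K^{-1}-(q-q^{-1})^2C_1$; $(\kappa,c)\in\mathbb{C}^2$, $\kappa\ne0$, is critical if $h_n(\kappa,c)=0$ for some $n\in\mathbb{N}$ (there are at most two such $n$; $n_+$ and $n_-$ denote the largest and smallest). $J(\kappa,c)$ is the ideal generated by $K-\kappa$, $C_1-c$; $W(\eta;\kappa,c)=UJ(\kappa,c)v_\eta$, $V(\eta;\kappa,c)=M(\eta)/W(\eta;\kappa,c)$. $u_\pm=u(n_\pm,0,1)$ and $\bar u_\pm$ is its image in $V(\eta;\kappa,c)$. $\kappa_\epsilon=q^{-3n_\epsilon}\kappa$, $c_\epsilon=\frac{q^{n_\epsilon-3}\kappa^{-1}+q^{3-n_\epsilon}\kappa}{(q-q^{-1})^2}$ for $\epsilon\in\{+,-\}$. *)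

theory Defs
  imports Complex_Main "HOL-Library.Poly_Mapping"
begin

datatype gen = GE1 | GE2 | GF1 | GF2 | GK1 | GK1i | GK2 | GK2i
  \<comment> \<open>GK1i, GK2i stand for K_1^{-1}, K_2^{-1}\<close>

datatype word = Word "gen list"

instantiation word :: monoid_add
begin
definition zero_word :: word where "zero_word = Word []"
fun plus_word :: "word \<Rightarrow> word \<Rightarrow> word" where
  "plus_word (Word xs) (Word ys) = Word (xs @ ys)"
instance
proof
  fix a b c :: word
  show "a + b + c = a + (b + c)" by (cases a; cases b; cases c) simp
  show "0 + a = a" by (cases a) (simp add: zero_word_def)
  show "a + 0 = a" by (cases a) (simp add: zero_word_def)
qed
end

text \<open>Noncommutative polynomials over the complex numbers in the generators:
  finitely supported functions on words; multiplication is concatenation-convolution.\<close>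
type_synonym fa = "word \<Rightarrow>\<^sub>0 complex"

definition gen :: "gen \<Rightarrow> fa" where "gen g = Poly_Mapping.single (Word [g]) 1"

definition sc :: "complex \<Rightarrow> fa" where "sc c = Poly_Mapping.single 0 c"

abbreviation "E1 \<equiv> gen GE1"
abbreviation "E2 \<equiv> gen GE2"
abbreviation "F1 \<equiv> gen GF1"
abbreviation "F2 \<equiv> gen GF2"
abbreviation "K1 \<equiv> gen GK1"
abbreviation "K1i \<equiv> gen GK1i"
abbreviation "K2 \<equiv> gen GK2"
abbreviation "K2i \<equiv> gen GK2i"

definition Eg :: "nat \<Rightarrow> fa" where "Eg i = (if i = 1 then E1 else E2)"
definition Fg :: "nat \<Rightarrow> fa" where "Fg i = (if i = 1 then F1 else F2)"
definition Kg :: "nat \<Rightarrow> fa" where "Kg i = (if i = 1 then K1 else K2)"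
definition Kig :: "nat \<Rightarrow> fa" where "Kig i = (if i = 1 then K1i else K2i)"

definition cartan :: "nat \<Rightarrow> nat \<Rightarrow> int" where
  "cartan i j = (if i = j then 2 else -1)"

text \<open>The Jimbo relations of U_q(sl_3) (as elements of the free algebra that must vanish).\<close>
definition jimbo_rels :: "complex \<Rightarrow> fa set" where
  "jimbo_rels q =
     {Kg i * Kig i - 1 | i. i \<in> {1,2}} \<union> {Kig i * Kg i - 1 | i. i \<in> {1,2}}
   \<union> {Kg i * Kg j - Kg j * Kg i | i j. i \<in> {1,2} \<and> j \<in> {1,2}}
   \<union> {Kg i * Eg j * Kig i - sc (q powi cartan i j) * Eg j | i j. i \<in> {1,2} \<and> j \<in> {1,2}}
   \<union> {Kg i * Fg j * Kig i - sc (q powi (- cartan i j)) * Fg j | i j. i \<in> {1,2} \<and> j \<in> {1,2}}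
   \<union> {Eg i * Fg j - Fg j * Eg i
        - (if i = j then sc (1 / (q - inverse q)) * (Kg i - Kig i) else 0)
        | i j. i \<in> {1,2} \<and> j \<in> {1,2}}
   \<union> {Eg i ^ 2 * Eg j - sc (q + inverse q) * Eg i * Eg j * Eg i + Eg j * Eg i ^ 2
        | i j. i \<in> {1,2} \<and> j \<in> {1,2} \<and> i \<noteq> j}
   \<union> {Fg i ^ 2 * Fg j - sc (q + inverse q) * Fg i * Fg j * Fg i + Fg j * Fg i ^ 2
        | i j. i \<in> {1,2} \<and> j \<in> {1,2} \<and> i \<noteq> j}"

definition F3 :: "complex \<Rightarrow> fa" where "F3 q = F1 * F2 - sc q * F2 * F1"

definition Kel :: fa where "Kel = K1 * K2 ^ 2"
definition Kinv :: fa where "Kinv = K1i * K2i ^ 2"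

definition C1 :: "complex \<Rightarrow> fa" where
  "C1 q = F1 * E1 + sc (1 / (q - inverse q) ^ 2) * (sc q * K1 + sc (inverse q) * K1i)"

definition qint :: "complex \<Rightarrow> nat \<Rightarrow> complex" where
  "qint q k = (q ^ k - inverse q ^ k) / (q - inverse q)"

definition qfact :: "complex \<Rightarrow> nat \<Rightarrow> complex" where
  "qfact q k = (\<Prod>i\<in>{1..k}. qint q i)"

definition qbinom :: "complex \<Rightarrow> nat \<Rightarrow> nat \<Rightarrow> complex" where
  "qbinom q n k = (if k \<le> n then qfact q n / (qfact q k * qfact q (n - k)) else 0)"

section \<open>The vectors u(n,0,1) (as elements of the free algebra, to be applied to v_eta)\<close>

text \<open>The exponent k(2n+2j+k-7)/2 is always an integer since k(k-7) is even.\<close>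
definition acoef :: "complex \<Rightarrow> complex \<Rightarrow> nat \<Rightarrow> nat \<Rightarrow> nat \<Rightarrow> complex" where
  "acoef q \<alpha> n k j =
     (-1) ^ j * \<alpha> ^ k * (q\<^sup>2 - 1) ^ k * q powi (int j * (int n - 3))
     * q powi ((int k * (2 * int n + 2 * int j + int k - 7)) div 2)
     * qbinom q n k * qbinom q (n - k) j"

definition u01 :: "complex \<Rightarrow> complex \<Rightarrow> nat \<Rightarrow> fa" where
  "u01 q \<alpha> n = (\<Sum>k\<in>{0..n}. \<Sum>j\<in>{0..n-k}.
      sc (acoef q \<alpha> n k j) * F2 ^ (n - k) * F3 q ^ k * K2 ^ (2 * j) * Kinv ^ (2 * j + k))"

text \<open>V(eta;kappa,c) = M(eta)/W(eta;kappa,c) with M(eta) = U/U(E_1-alpha, E_2) and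
  W = U J(kappa,c) v_eta.  Pulling back to the free algebra, V = fa / Nsub, where Nsub is the
  left ideal generated by the two-sided ideal of the Jimbo relations, by E_1 - alpha, E_2
  (the kernel of eta), and by J(kappa,c) (the ideal of C[K^{+-1},C_1] generated by K - kappa,
  C_1 - c), the latter multiplied by arbitrary elements of the algebra.\<close>

inductive_set Kalg :: "complex \<Rightarrow> fa set" for q where
  "sc a \<in> Kalg q"
| "Kel \<in> Kalg q"
| "Kinv \<in> Kalg q"
| "C1 q \<in> Kalg q"
| "x \<in> Kalg q \<Longrightarrow> y \<in> Kalg q \<Longrightarrow> x + y \<in> Kalg q"
| "x \<in> Kalg q \<Longrightarrow> y \<in> Kalg q \<Longrightarrow> x * y \<in> Kalg q"

definition Jideal :: "complex \<Rightarrow> complex \<Rightarrow> complex \<Rightarrow> fa set" where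
  "Jideal q \<kappa> c = {a * (Kel - sc \<kappa>) + b * (C1 q - sc c) | a b. a \<in> Kalg q \<and> b \<in> Kalg q}"

inductive_set Nsub :: "complex \<Rightarrow> complex \<Rightarrow> complex \<Rightarrow> complex \<Rightarrow> fa set"
  for q \<alpha> \<kappa> c where
  zero: "0 \<in> Nsub q \<alpha> \<kappa> c"
| add: "x \<in> Nsub q \<alpha> \<kappa> c \<Longrightarrow> y \<in> Nsub q \<alpha> \<kappa> c \<Longrightarrow> x + y \<in> Nsub q \<alpha> \<kappa> c"
| lmult: "x \<in> Nsub q \<alpha> \<kappa> c \<Longrightarrow> a * x \<in> Nsub q \<alpha> \<kappa> c"
| rel: "r \<in> jimbo_rels q \<Longrightarrow> a * r * b \<in> Nsub q \<alpha> \<kappa> c"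
| eta1: "E1 - sc \<alpha> \<in> Nsub q \<alpha> \<kappa> c"
| eta2: "E2 \<in> Nsub q \<alpha> \<kappa> c"
| J: "j \<in> Jideal q \<kappa> c \<Longrightarrow> j \<in> Nsub q \<alpha> \<kappa> c"

text \<open>x v = y v in V(eta;kappa,c), for the generating vector v (image of v_eta).\<close>
definition eqV :: "complex \<Rightarrow> complex \<Rightarrow> complex \<Rightarrow> complex \<Rightarrow> fa \<Rightarrow> fa \<Rightarrow> bool" where
  "eqV q \<alpha> \<kappa> c x y \<longleftrightarrow> x - y \<in> Nsub q \<alpha> \<kappa> c"

definition hfun :: "complex \<Rightarrow> nat \<Rightarrow> complex \<Rightarrow> complex \<Rightarrow> complex" where
  "hfun q n \<kappa> c = q powi (3 - 2 * int n) * \<kappa> + q powi (2 * int n - 3) * inverse \<kappa>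
                   - (q - inverse q)\<^sup>2 * c"

definition critset :: "complex \<Rightarrow> complex \<Rightarrow> complex \<Rightarrow> nat set" where
  "critset q \<kappa> c = {n. n \<ge> 1 \<and> hfun q n \<kappa> c = 0}"

definition critical :: "complex \<Rightarrow> complex \<Rightarrow> complex \<Rightarrow> bool" where
  "critical q \<kappa> c \<longleftrightarrow> \<kappa> \<noteq> 0 \<and> critset q \<kappa> c \<noteq> {}"

definition nplus :: "complex \<Rightarrow> complex \<Rightarrow> complex \<Rightarrow> nat" where
  "nplus q \<kappa> c = Max (critset q \<kappa> c)"
definition nminus :: "complex \<Rightarrow> complex \<Rightarrow> complex \<Rightarrow> nat" where
  "nminus q \<kappa> c = Min (critset q \<kappa> c)"

definition kappa_eps :: "complex \<Rightarrow> complex \<Rightarrow> nat \<Rightarrow> complex" where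
  "kappa_eps q \<kappa> m = q powi (- 3 * int m) * \<kappa>"
definition c_eps :: "complex \<Rightarrow> complex \<Rightarrow> nat \<Rightarrow> complex" where
  "c_eps q \<kappa> m = (q powi (int m - 3) * inverse \<kappa> + q powi (3 - int m) * \<kappa>) / (q - inverse q)\<^sup>2"

end

theory Submission
  imports Defs
begin


definition qq :: "complex \<Rightarrow> complex \<Rightarrow> complex \<Rightarrow> complex" where
  "qq q P t = q * (t - inverse t) / P"

lemma bracket:
  fixes q X Y Z \<kappa> \<alpha> P c cn :: complex
  assumes q: "q \<noteq> 0" and P: "P \<noteq> 0" and X: "X \<noteq> 0" and Y: "Y \<noteq> 0" and Z: "Z \<noteq> 0"
    and k: "\<kappa> \<noteq> 0" and a: "\<alpha> \<noteq> 0"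
    and c: "c = (q^3 * \<kappa> / Z^2 + Z^2 / (q^3 * \<kappa>)) * (q^2 / P^2)"
    and cn: "cn = (Z / (q^3 * \<kappa>) + q^3 * \<kappa> / Z) * (q^2 / P^2)"
  shows
   "(Z / X^2 * c) * 1 * (qq q P (q*X) * qq q P (q*Z/(X*Y)))
    + (inverse \<kappa> * ((X^2/(Z*q) - Z/(X^2*q)) * (q^2 / P^2) + qq q P X * qq q P (q*Z/X))) * ((-1) * q^3/(Z*X) * \<kappa>^2) * (qq q P (q*X) * qq q P Y)
    + (\<alpha> * Y^2 * qq q P (q*Z/X)) * (q^4/(Z*Y*X) * \<kappa> / (\<alpha> * P)) * (qq q P X * qq q P (q*X))
    + (qq q P (q*X) * (Z/(X^2*Y^2)) * c / (\<alpha>*\<kappa>)) * ((-1) * \<alpha> * P * Y / q * \<kappa>) * (qq q P Y * qq q P (q*Z/(X*Y)))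
    - (qq q P (q*X) * (Z/(q*X^2*Y^2)) * (q^2 / P^2) / \<alpha>) * (\<alpha>*P*Z*Y*X/(q^3*\<kappa>)) * (qq q P (q*Z/(X*Y)) * qq q P (Z/(X*Y)))
    - (qq q P (q*X) * (q*Z/(X^2*Y^2)) * (q^2 / P^2) / (\<alpha>*\<kappa>^2)) * (\<alpha>*P*q*Y/(Z*X)*\<kappa>^3) * (qq q P Y * qq q P (Y/q))
    = cn * (qq q P (q*X) * qq q P (q*Z/(X*Y)))"
  unfolding qq_def c cn
  using q X Y Z k a P
  apply (simp add: field_simps)
  by algebra



section \<open>Scalars\<close>

lemma Sum_any_aux: "(\<Sum>q. (((s::'b::semiring_0) when 0 = q) when (x::'a::monoid_add) = l + q)) = (s when x = l)"
proof -
  have "(\<lambda>q. ((s when 0 = q) when x = l + q)) = (\<lambda>q. if q = 0 then (s when x = l) else 0)"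
    by (auto simp: fun_eq_iff when_def)
  then show ?thesis by (simp only: Sum_any.delta)
qed

lemma Sum_any_aux2: "(\<Sum>l. (p l * ((s::'b::semiring_0) when (x::'a::monoid_add) = l))) = p x * s"
proof -
  have "(\<lambda>l. (p l * (s when x = l))) = (\<lambda>l. if l = x then p l * s else 0)"
    by (auto simp: fun_eq_iff when_def)
  then show ?thesis by (simp only: Sum_any.delta)
qed

lemma single_right: "(p::'a::monoid_add \<Rightarrow>\<^sub>0 'b::semiring_0) * Poly_Mapping.single 0 s = Poly_Mapping.map (\<lambda>x. x * s) p"
proof (transfer fixing: s)
  fix p :: "'a \<Rightarrow> 'b"
  assume *: "finite {x. p x \<noteq> 0}"
  have "prod_fun p (\<lambda>k'. s when 0 = k') x = (\<lambda>k. p k * s when p k \<noteq> 0) x" for x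
    unfolding prod_fun_def Sum_any_aux Sum_any_aux2 by (simp add: when_def)
  then show "prod_fun p (\<lambda>k'. s when 0 = k') = (\<lambda>k. p k * s when p k \<noteq> 0)"
    by (simp add: fun_eq_iff)
qed

lemma sc_comm: "x * sc s = sc s * (x::fa)"
  unfolding sc_def single_right mult_map_scale_conv_mult[symmetric]
  by (metis (no_types) mult.commute)

lemma sc_mult: "sc a * sc b = sc (a * b)"
  by (simp add: sc_def mult_single)
lemma sc_mult2: "sc a * (sc b * x) = sc (a * b) * x"
  by (simp add: sc_mult mult.assoc[symmetric])
lemma sc_lcomm: "x * (sc s * y) = sc s * (x * (y::fa))"
  by (metis mult.assoc sc_comm)
lemma sc_add: "sc a + sc b = sc (a + b)"
  by (simp add: sc_def single_add)
lemma sc_diff: "sc a - sc b = sc (a - b)"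
  by (simp add: sc_def single_diff)
lemma sc_uminus: "- sc a = sc (- a)"
  by (simp add: sc_def single_uminus)
lemma sc_0[simp]: "sc 0 = 0" by (simp add: sc_def)
lemma sc_1[simp]: "sc 1 = 1" by (simp add: sc_def)
lemma sc_0_mult[simp]: "sc 0 * x = 0" by simp
lemma sc_1_mult[simp]: "sc 1 * x = x" by simp
lemma sc_distL: "sc a * x + sc b * x = sc (a + b) * (x::fa)"
  by (simp add: sc_add[symmetric] distrib_right)
lemma sc_minus_one: "sc (-1) * x = - (x::fa)"
  by (simp add: sc_uminus[symmetric])
lemma sc_sum: "(\<Sum>i\<in>I. sc (f i)) = sc (\<Sum>i\<in>I. f i)"
  by (induction I rule: infinite_finite_induct) (auto simp: sc_add)



section \<open>Two-sided ideal of relations\<close>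

inductive_set Iq :: "complex \<Rightarrow> fa set" for q where
  Irel: "r \<in> jimbo_rels q \<Longrightarrow> a * r * b \<in> Iq q"
| Izero: "0 \<in> Iq q"
| Iadd: "x \<in> Iq q \<Longrightarrow> y \<in> Iq q \<Longrightarrow> x + y \<in> Iq q"

lemma Iq_lmult: "x \<in> Iq q \<Longrightarrow> a * x \<in> Iq q"
proof (induction rule: Iq.induct)
  case (Irel r b c) then show ?case using Iq.Irel[of r q "a*b" c] by (simp add: mult.assoc)
next case Izero then show ?case by (simp add: Iq.Izero)
next case (Iadd x y) then show ?case by (simp add: distrib_left Iq.Iadd)
qed

lemma Iq_rmult: "x \<in> Iq q \<Longrightarrow> x * a \<in> Iq q"
proof (induction rule: Iq.induct)
  case (Irel r b c) then show ?case using Iq.Irel[of r q "b" "c*a"] by (simp add: mult.assoc)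
next case Izero then show ?case by (simp add: Iq.Izero)
next case (Iadd x y) then show ?case by (simp add: distrib_right Iq.Iadd)
qed

lemma Iq_uminus: "x \<in> Iq q \<Longrightarrow> - x \<in> Iq q"
  using Iq_lmult[of x q "-1"] by simp

lemma Iq_diff: "x \<in> Iq q \<Longrightarrow> y \<in> Iq q \<Longrightarrow> x - y \<in> Iq q"
  using Iq.Iadd[of x q "-y"] Iq_uminus by simp

lemma Iq_Nsub: "x \<in> Iq q \<Longrightarrow> x \<in> Nsub q \<alpha> \<kappa> c"
  by (induction rule: Iq.induct) (auto intro: Nsub.intros)

definition cg :: "complex \<Rightarrow> fa \<Rightarrow> fa \<Rightarrow> bool" where
  "cg q x y \<longleftrightarrow> x - y \<in> Iq q"

lemma cg_refl[simp]: "cg q x x" by (simp add: cg_def Iq.Izero)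
lemma cg_eq: "x = y \<Longrightarrow> cg q x y" by simp
lemma cg_sym: "cg q x y \<Longrightarrow> cg q y x"
  unfolding cg_def using Iq_uminus by fastforce
lemma cg_trans[trans]: "cg q x y \<Longrightarrow> cg q y z \<Longrightarrow> cg q x z"
  unfolding cg_def using Iq.Iadd by fastforce
lemma cg_add: "cg q a b \<Longrightarrow> cg q c d \<Longrightarrow> cg q (a + c) (b + d)"
  unfolding cg_def using Iq.Iadd by (fastforce simp: algebra_simps)
lemma cg_diff: "cg q a b \<Longrightarrow> cg q c d \<Longrightarrow> cg q (a - c) (b - d)"
  unfolding cg_def using Iq_diff by (fastforce simp: algebra_simps)
lemma cg_mult: "cg q a b \<Longrightarrow> cg q c d \<Longrightarrow> cg q (a * c) (b * d)"
proof -
  assume "cg q a b" "cg q c d"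
  then have "(a - b) * c \<in> Iq q" "b * (c - d) \<in> Iq q" unfolding cg_def by (auto intro: Iq_lmult Iq_rmult)
  then have "(a - b) * c + b * (c - d) \<in> Iq q" by (rule Iq.Iadd)
  then show ?thesis unfolding cg_def by (simp add: algebra_simps)
qed
lemma cg_lmult: "cg q c d \<Longrightarrow> cg q (a * c) (a * d)" by (rule cg_mult[OF cg_refl])
lemma cg_rmult: "cg q a b \<Longrightarrow> cg q (a * c) (b * c)" by (rule cg_mult[OF _ cg_refl])
lemma cg_ctx: "cg q x y \<Longrightarrow> cg q (a * x * b) (a * y * b)" by (intro cg_mult cg_refl)
lemma cg_sum: "(\<And>i. i \<in> I \<Longrightarrow> cg q (f i) (g i)) \<Longrightarrow> cg q (\<Sum>i\<in>I. f i) (\<Sum>i\<in>I. g i)"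
  by (induction I rule: infinite_finite_induct) (auto intro: cg_add)

lemma rel_cg: "r \<in> jimbo_rels q \<Longrightarrow> cg q r 0"
  unfolding cg_def using Iq.Irel[of r q 1 1] by simp

lemma eqV_refl[simp]: "eqV q \<alpha> \<kappa> c x x" by (simp add: eqV_def Nsub.zero)
lemma eqV_sym: "eqV q \<alpha> \<kappa> c x y \<Longrightarrow> eqV q \<alpha> \<kappa> c y x"
  unfolding eqV_def using Nsub.lmult[of "x-y" q \<alpha> \<kappa> c "-1"] by simp
lemma eqV_trans[trans]: "eqV q \<alpha> \<kappa> c x y \<Longrightarrow> eqV q \<alpha> \<kappa> c y z \<Longrightarrow> eqV q \<alpha> \<kappa> c x z"
  unfolding eqV_def using Nsub.add by fastforce
lemma cg_eqV: "cg q x y \<Longrightarrow> eqV q \<alpha> \<kappa> c x y"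
  unfolding cg_def eqV_def by (rule Iq_Nsub)
lemma eqV_cg_trans[trans]: "eqV q \<alpha> \<kappa> c x y \<Longrightarrow> cg q y z \<Longrightarrow> eqV q \<alpha> \<kappa> c x z"
  using cg_eqV eqV_trans by blast
lemma cg_eqV_trans[trans]: "cg q x y \<Longrightarrow> eqV q \<alpha> \<kappa> c y z \<Longrightarrow> eqV q \<alpha> \<kappa> c x z"
  using cg_eqV eqV_trans by blast
lemma eqV_add: "eqV q \<alpha> \<kappa> c a b \<Longrightarrow> eqV q \<alpha> \<kappa> c a' b' \<Longrightarrow> eqV q \<alpha> \<kappa> c (a + a') (b + b')"
  unfolding eqV_def using Nsub.add by (fastforce simp: algebra_simps)
lemma eqV_lmult: "eqV q \<alpha> \<kappa> c x y \<Longrightarrow> eqV q \<alpha> \<kappa> c (a * x) (a * y)"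
  unfolding eqV_def using Nsub.lmult by (fastforce simp: algebra_simps)
lemma eqV_sum: "(\<And>i. i \<in> I \<Longrightarrow> eqV q \<alpha> \<kappa> c (f i) (g i)) \<Longrightarrow> eqV q \<alpha> \<kappa> c (\<Sum>i\<in>I. f i) (\<Sum>i\<in>I. g i)"
  by (induction I rule: infinite_finite_induct) (auto intro: eqV_add)
lemma eqV_zero: "x \<in> Nsub q \<alpha> \<kappa> c \<Longrightarrow> eqV q \<alpha> \<kappa> c x 0"
  by (simp add: eqV_def)

section \<open>Relations\<close>

lemma jr1: "i \<in> {1,2} \<Longrightarrow> Kg i * Kig i - 1 \<in> jimbo_rels q" by (auto simp: jimbo_rels_def)
lemma jr2: "i \<in> {1,2} \<Longrightarrow> Kig i * Kg i - 1 \<in> jimbo_rels q" by (auto simp: jimbo_rels_def)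
lemma jr3: "i \<in> {1,2} \<Longrightarrow> j \<in> {1,2} \<Longrightarrow> Kg i * Kg j - Kg j * Kg i \<in> jimbo_rels q" by (auto simp: jimbo_rels_def)
lemma jr4: "i \<in> {1,2} \<Longrightarrow> j \<in> {1,2} \<Longrightarrow> Kg i * Eg j * Kig i - sc (q powi cartan i j) * Eg j \<in> jimbo_rels q"
  by (auto simp: jimbo_rels_def)
lemma jr5: "i \<in> {1,2} \<Longrightarrow> j \<in> {1,2} \<Longrightarrow> Kg i * Fg j * Kig i - sc (q powi (- cartan i j)) * Fg j \<in> jimbo_rels q"
  by (auto simp: jimbo_rels_def)
lemma jr6: "i \<in> {1,2} \<Longrightarrow> j \<in> {1,2} \<Longrightarrow> Eg i * Fg j - Fg j * Eg i
        - (if i = j then sc (1 / (q - inverse q)) * (Kg i - Kig i) else 0) \<in> jimbo_rels q"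
  by (auto simp: jimbo_rels_def)
lemma jr8: "i \<in> {1,2} \<Longrightarrow> j \<in> {1,2} \<Longrightarrow> i \<noteq> j \<Longrightarrow>
   Fg i ^ 2 * Fg j - sc (q + inverse q) * Fg i * Fg j * Fg i + Fg j * Fg i ^ 2 \<in> jimbo_rels q"
  by (auto simp: jimbo_rels_def)

lemma cg_rel: "r \<in> jimbo_rels q \<Longrightarrow> x - y = r \<Longrightarrow> cg q x y"
  using rel_cg[of r q] by (simp add: cg_def)

lemma K1K1i: "cg q (K1 * K1i) 1" by (rule cg_rel[OF jr1[of 1]]) (simp_all add: Kg_def Kig_def)
lemma K1iK1: "cg q (K1i * K1) 1" by (rule cg_rel[OF jr2[of 1]]) (simp_all add: Kg_def Kig_def)
lemma K2K2i: "cg q (K2 * K2i) 1" by (rule cg_rel[OF jr1[of 2]]) (simp_all add: Kg_def Kig_def)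
lemma K2iK2: "cg q (K2i * K2) 1" by (rule cg_rel[OF jr2[of 2]]) (simp_all add: Kg_def Kig_def)
lemma K1K2: "cg q (K1 * K2) (K2 * K1)" by (rule cg_rel[OF jr3[of 1 2]]) (simp_all add: Kg_def Kig_def)
lemma K2E1K2i: "cg q (K2 * E1 * K2i) (sc (inverse q) * E1)"
  by (rule cg_rel[OF jr4[of 2 1]]) (simp_all add: Kg_def Kig_def Eg_def cartan_def)
lemma K1F1K1i: "cg q (K1 * F1 * K1i) (sc (inverse q ^ 2) * F1)"
  by (rule cg_rel[OF jr5[of 1 1]]) (simp_all add: Kg_def Kig_def Fg_def cartan_def power_int_minus power_inverse)
lemma K1F2K1i: "cg q (K1 * F2 * K1i) (sc q * F2)"
  by (rule cg_rel[OF jr5[of 1 2]]) (simp_all add: Kg_def Kig_def Fg_def cartan_def)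
lemma K2F1K2i: "cg q (K2 * F1 * K2i) (sc q * F1)"
  by (rule cg_rel[OF jr5[of 2 1]]) (simp_all add: Kg_def Kig_def Fg_def cartan_def)
lemma K2F2K2i: "cg q (K2 * F2 * K2i) (sc (inverse q ^ 2) * F2)"
  by (rule cg_rel[OF jr5[of 2 2]]) (simp_all add: Kg_def Kig_def Fg_def cartan_def power_int_minus power_inverse)
lemma E1F1: "cg q (E1 * F1) (F1 * E1 + sc (1 / (q - inverse q)) * (K1 - K1i))"
  by (rule cg_rel[OF jr6[of 1 1]]) (simp_all add: Kg_def Kig_def Fg_def Eg_def algebra_simps)
lemma E1F2: "cg q (E1 * F2) (F2 * E1)"
  by (rule cg_rel[OF jr6[of 1 2]]) (simp_all add: Kg_def Kig_def Fg_def Eg_def)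
lemma Serre12: "cg q (F1 ^ 2 * F2 + F2 * F1 ^ 2) (sc (q + inverse q) * F1 * F2 * F1)"
  by (rule cg_rel[OF jr8[of 1 2]]) (simp_all add: Fg_def algebra_simps)
lemma Serre21: "cg q (F2 ^ 2 * F1 + F1 * F2 ^ 2) (sc (q + inverse q) * F2 * F1 * F2)"
  by (rule cg_rel[OF jr8[of 2 1]]) (simp_all add: Fg_def algebra_simps)

section \<open>q-commutation\<close>

definition qc :: "complex \<Rightarrow> fa \<Rightarrow> fa \<Rightarrow> complex \<Rightarrow> bool" where
  "qc q X Y s \<longleftrightarrow> cg q (X * Y) (sc s * (Y * X))"

lemma qc_of_conj:
  assumes "cg q (X * Y * Xi) (sc s * Y)" "cg q (Xi * X) 1"
  shows "qc q X Y s"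
proof -
  have "cg q (X * Y) (X * Y * (Xi * X))" using cg_lmult[OF cg_sym[OF assms(2)], of "X*Y"] by simp
  also have "X * Y * (Xi * X) = (X * Y * Xi) * X" by (simp add: mult.assoc)
  also have "cg q \<dots> (sc s * Y * X)" by (rule cg_rmult[OF assms(1)])
  finally show ?thesis unfolding qc_def by (simp add: mult.assoc)
qed

lemma qc_swap:
  assumes "qc q X Y s" "s \<noteq> 0"
  shows "qc q Y X (inverse s)"
proof -
  have "cg q (sc (inverse s) * (X * Y)) (sc (inverse s) * (sc s * (Y * X)))"
    using assms(1) unfolding qc_def by (rule cg_lmult)
  also have "sc (inverse s) * (sc s * (Y * X)) = Y * X" using assms(2) by (simp add: sc_mult2)
  finally show ?thesis unfolding qc_def by (rule cg_sym)
qed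

lemma qc_inv_left:
  assumes "qc q X Y s" "cg q (X * Xi) 1" "cg q (Xi * X) 1" "s \<noteq> 0"
  shows "qc q Xi Y (inverse s)"
proof -
  have YX: "cg q (Y * X) (sc (inverse s) * (X * Y))" using qc_swap[OF _ assms(4)] assms(1)
    by (metis qc_def qc_swap assms(4) cg_sym)
  have "cg q (Xi * Y) (Xi * Y * (X * Xi))" using cg_lmult[OF cg_sym[OF assms(2)], of "Xi*Y"] by simp
  also have "Xi * Y * (X * Xi) = Xi * (Y * X) * Xi" by (simp add: mult.assoc)
  also have "cg q \<dots> (Xi * (sc (inverse s) * (X * Y)) * Xi)" by (rule cg_ctx[OF YX])
  also have "Xi * (sc (inverse s) * (X * Y)) * Xi = sc (inverse s) * ((Xi * X) * (Y * Xi))"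
    by (simp add: mult.assoc sc_lcomm[of Xi])
  also have "cg q \<dots> (sc (inverse s) * (1 * (Y * Xi)))" by (intro cg_lmult cg_rmult assms(3))
  finally show ?thesis unfolding qc_def by simp
qed

lemma qc_mult_left:
  assumes "qc q X1 Y s1" "qc q X2 Y s2"
  shows "qc q (X1 * X2) Y (s1 * s2)"
proof -
  have "X1 * X2 * Y = X1 * (X2 * Y)" by (simp add: mult.assoc)
  also have "cg q \<dots> (X1 * (sc s2 * (Y * X2)))" using assms(2) unfolding qc_def by (rule cg_lmult)
  also have "X1 * (sc s2 * (Y * X2)) = sc s2 * ((X1 * Y) * X2)" by (simp add: mult.assoc sc_lcomm[of X1])
  also have "cg q \<dots> (sc s2 * ((sc s1 * (Y * X1)) * X2))" using assms(1) unfolding qc_def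
    by (intro cg_lmult cg_rmult)
  also have "sc s2 * ((sc s1 * (Y * X1)) * X2) = sc (s1 * s2) * (Y * (X1 * X2))"
    by (simp add: mult.assoc sc_mult2 mult.commute)
  finally show ?thesis unfolding qc_def .
qed

lemma qc_mult_right:
  assumes "qc q X Y1 s1" "qc q X Y2 s2"
  shows "qc q X (Y1 * Y2) (s1 * s2)"
proof -
  have "X * (Y1 * Y2) = (X * Y1) * Y2" by (simp add: mult.assoc)
  also have "cg q \<dots> ((sc s1 * (Y1 * X)) * Y2)" using assms(1) unfolding qc_def by (rule cg_rmult)
  also have "(sc s1 * (Y1 * X)) * Y2 = sc s1 * (Y1 * (X * Y2))" by (simp add: mult.assoc)
  also have "cg q \<dots> (sc s1 * (Y1 * (sc s2 * (Y2 * X))))" using assms(2) unfolding qc_def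
    by (intro cg_lmult)
  also have "sc s1 * (Y1 * (sc s2 * (Y2 * X))) = sc (s1 * s2) * ((Y1 * Y2) * X)"
    by (simp add: mult.assoc sc_mult2 sc_lcomm[of Y1])
  finally show ?thesis unfolding qc_def .
qed

lemma qc_one_right: "qc q X 1 1" by (simp add: qc_def)
lemma qc_one_left: "qc q 1 Y 1" by (simp add: qc_def)

lemma qc_pow_right: "qc q X Y s \<Longrightarrow> qc q X (Y ^ n) (s ^ n)"
  by (induction n) (auto simp: qc_one_right intro: qc_mult_right)

lemma qc_pow_left: "qc q X Y s \<Longrightarrow> qc q (X ^ n) Y (s ^ n)"
  by (induction n) (auto simp: qc_one_left intro: qc_mult_left)

lemma qc_diff_right:
  assumes "qc q X Y1 s" "qc q X Y2 s"
  shows "qc q X (Y1 - sc t * Y2) s"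
proof -
  have "X * (Y1 - sc t * Y2) = X * Y1 - sc t * (X * Y2)" by (simp add: algebra_simps sc_lcomm[of X])
  also have "cg q \<dots> (sc s * (Y1 * X) - sc t * (sc s * (Y2 * X)))"
    using assms unfolding qc_def by (intro cg_diff cg_lmult)
  also have "sc s * (Y1 * X) - sc t * (sc s * (Y2 * X)) = sc s * ((Y1 - sc t * Y2) * X)"
    by (simp add: algebra_simps sc_mult2 mult.commute)
  finally show ?thesis unfolding qc_def .
qed

lemma qc_cong: "qc q X Y s \<Longrightarrow> s = t \<Longrightarrow> qc q X Y t" by simp

lemma cg_scale: "cg q x y \<Longrightarrow> cg q (sc a * x) (sc a * y)" by (rule cg_lmult)

lemma qK1F1: "qc q K1 F1 (inverse q ^ 2)" by (rule qc_of_conj[OF K1F1K1i K1iK1])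
lemma qK1F2: "qc q K1 F2 q" by (rule qc_of_conj[OF K1F2K1i K1iK1])
lemma qK2F1: "qc q K2 F1 q" by (rule qc_of_conj[OF K2F1K2i K2iK2])
lemma qK2F2: "qc q K2 F2 (inverse q ^ 2)" by (rule qc_of_conj[OF K2F2K2i K2iK2])
lemma qK2E1: "qc q K2 E1 (inverse q)" by (rule qc_of_conj[OF K2E1K2i K2iK2])
lemma qK1K2: "qc q K1 K2 1" using K1K2 by (simp add: qc_def)
lemma qK2K1: "qc q K2 K1 1" using qc_swap[OF qK1K2] by simp
lemma qE1F2: "qc q E1 F2 1" using E1F2 by (simp add: qc_def)

lemma F3_alt: "F3 q = F1 * F2 - sc q * (F2 * F1)" by (simp add: F3_def mult.assoc)

lemma qK1F3: "q \<noteq> 0 \<Longrightarrow> qc q K1 (F3 q) (inverse q)"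
  unfolding F3_alt
  apply (rule qc_diff_right)
   apply (rule qc_cong[OF qc_mult_right[OF qK1F1 qK1F2]]) apply (simp add: power2_eq_square)
  apply (rule qc_cong[OF qc_mult_right[OF qK1F2 qK1F1]]) apply (simp add: power2_eq_square)
  done

lemma qK2F3: "q \<noteq> 0 \<Longrightarrow> qc q K2 (F3 q) (inverse q)"
  unfolding F3_alt
  apply (rule qc_diff_right)
   apply (rule qc_cong[OF qc_mult_right[OF qK2F1 qK2F2]]) apply (simp add: power2_eq_square)
  apply (rule qc_cong[OF qc_mult_right[OF qK2F2 qK2F1]]) apply (simp add: power2_eq_square)
  done

lemma qK1iF2: "q \<noteq> 0 \<Longrightarrow> qc q K1i F2 (inverse q)"
  by (rule qc_inv_left[OF qK1F2 K1K1i K1iK1])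
lemma qK1iF3: "q \<noteq> 0 \<Longrightarrow> qc q K1i (F3 q) q"
  using qc_inv_left[OF qK1F3 K1K1i K1iK1] by simp
lemma qK1iK2: "qc q K1i K2 1"
  using qc_inv_left[OF qK1K2 K1K1i K1iK1] by simp
lemma qK2iK1: "qc q K2i K1 1"
  using qc_inv_left[OF qK2K1 K2K2i K2iK2] by simp
lemma qK2K1i: "qc q K2 K1i 1"
  using qc_swap[OF qK1iK2] by simp

lemma qKelF2: "q \<noteq> 0 \<Longrightarrow> qc q Kel F2 (inverse q ^ 3)"
  unfolding Kel_def
  by (rule qc_cong[OF qc_mult_left[OF qK1F2 qc_pow_left[OF qK2F2]]]) (simp add: field_simps power2_eq_square power3_eq_cube)
lemma qKelF3: "q \<noteq> 0 \<Longrightarrow> qc q Kel (F3 q) (inverse q ^ 3)"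
  unfolding Kel_def
  by (rule qc_cong[OF qc_mult_left[OF qK1F3 qc_pow_left[OF qK2F3]]]) (simp_all add: field_simps power2_eq_square power3_eq_cube)
lemma qKelK2: "qc q Kel K2 1"
  unfolding Kel_def
  by (rule qc_cong[OF qc_mult_left[OF qK1K2 qc_pow_left[of q K2 K2 1]]]) (simp_all add: qc_def)

lemma qF1K2: "q \<noteq> 0 \<Longrightarrow> qc q F1 K2 (inverse q)"
  by (rule qc_swap[OF qK2F1])
lemma qE1K2: "q \<noteq> 0 \<Longrightarrow> qc q E1 K2 q"
  using qc_swap[OF qK2E1] by simp

lemma cg_move: "cg q (a + b) c \<Longrightarrow> cg q b (c - a)"
  unfolding cg_def by (simp add: algebra_simps)

lemma cg_move2: "cg q (a + b) c \<Longrightarrow> cg q a (c - b)"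
  unfolding cg_def by (simp add: algebra_simps)

lemma qF3F2: "q \<noteq> 0 \<Longrightarrow> qc q (F3 q) F2 (inverse q)"
proof -
  assume q: "q \<noteq> 0"
  have S: "cg q (F1 * (F2 * F2)) (sc (q + inverse q) * (F2 * (F1 * F2)) - F2 * (F2 * F1))"
    using cg_move[OF Serre21[of q]] by (simp add: power2_eq_square mult.assoc)
  have "F3 q * F2 = F1 * (F2 * F2) - sc q * (F2 * (F1 * F2))" by (simp add: F3_alt algebra_simps)
  also have "cg q \<dots> ((sc (q + inverse q) * (F2 * (F1 * F2)) - F2 * (F2 * F1)) - sc q * (F2 * (F1 * F2)))"
    by (intro cg_diff S cg_refl)
  also have "(sc (q + inverse q) * (F2 * (F1 * F2)) - F2 * (F2 * F1)) - sc q * (F2 * (F1 * F2))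
     = sc (inverse q) * (F2 * F3 q)"
    by (simp add: F3_alt algebra_simps sc_add[symmetric] sc_mult2 sc_lcomm[of F2] q)
  finally show ?thesis unfolding qc_def .
qed

lemma qF1F3: "q \<noteq> 0 \<Longrightarrow> qc q F1 (F3 q) (inverse q)"
proof -
  assume q: "q \<noteq> 0"
  have S: "cg q (F1 * (F1 * F2)) (sc (q + inverse q) * (F1 * (F2 * F1)) - F2 * (F1 * F1))"
    using cg_move2[OF Serre12[of q]] by (simp add: power2_eq_square mult.assoc)
  have "F1 * F3 q = F1 * (F1 * F2) - sc q * (F1 * (F2 * F1))" by (simp add: F3_alt algebra_simps sc_lcomm[of F1])
  also have "cg q \<dots> ((sc (q + inverse q) * (F1 * (F2 * F1)) - F2 * (F1 * F1)) - sc q * (F1 * (F2 * F1)))"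
    by (intro cg_diff S cg_refl)
  also have "(sc (q + inverse q) * (F1 * (F2 * F1)) - F2 * (F1 * F1)) - sc q * (F1 * (F2 * F1))
     = sc (inverse q) * (F3 q * F1)"
    by (simp add: F3_alt algebra_simps sc_add[symmetric] sc_mult2 q)
  finally show ?thesis unfolding qc_def .
qed

lemma E1F3:
  assumes q: "q \<noteq> 0" and D: "q - inverse q \<noteq> 0"
  shows "cg q (E1 * F3 q) (F3 q * E1 + F2 * K1i)"
proof -
  define h where "h = sc (1 / (q - inverse q)) * (K1 - K1i)"
  have e1: "cg q (E1 * F1) (F1 * E1 + h)" unfolding h_def by (rule E1F1)
  have e2: "cg q (E1 * F2) (F2 * E1)" by (rule E1F2)
  have "E1 * F3 q = (E1 * F1) * F2 - sc q * ((E1 * F2) * F1)"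
    by (simp add: F3_alt algebra_simps sc_lcomm[of E1])
  also have "cg q \<dots> ((F1 * E1 + h) * F2 - sc q * ((F2 * E1) * F1))"
    by (intro cg_diff cg_lmult cg_rmult e1 e2)
  also have "(F1 * E1 + h) * F2 - sc q * ((F2 * E1) * F1)
       = F1 * (E1 * F2) + h * F2 - sc q * (F2 * (E1 * F1))" by (simp add: algebra_simps)
  also have "cg q \<dots> (F1 * (F2 * E1) + h * F2 - sc q * (F2 * (F1 * E1 + h)))"
    by (intro cg_diff cg_add cg_lmult cg_rmult e1 e2 cg_refl)
  also have "F1 * (F2 * E1) + h * F2 - sc q * (F2 * (F1 * E1 + h))
      = F3 q * E1 + (sc (1 / (q - inverse q)) * (K1 * F2 - K1i * F2) - sc q * (F2 * h))"
    by (simp add: F3_alt algebra_simps h_def)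
  also have "cg q \<dots> (F3 q * E1 + (sc (1 / (q - inverse q)) * (sc q * (F2 * K1) - sc (inverse q) * (F2 * K1i)) - sc q * (F2 * h)))"
    using qK1F2[of q] qK1iF2[OF q] unfolding qc_def
    by (intro cg_add cg_diff cg_lmult cg_refl)
  also have "F3 q * E1 + (sc (1 / (q - inverse q)) * (sc q * (F2 * K1) - sc (inverse q) * (F2 * K1i)) - sc q * (F2 * h))
     = F3 q * E1 + (sc (q / (q - inverse q) - q / (q - inverse q)) * (F2 * K1) + sc (q / (q - inverse q) - inverse q / (q - inverse q)) * (F2 * K1i))"
    by (simp add: h_def algebra_simps sc_mult2 sc_lcomm[of F2] sc_diff[symmetric])
  also have "\<dots> = F3 q * E1 + F2 * K1i"
  proof -
    have "q / (q - inverse q) - inverse q / (q - inverse q) = 1" using D by (simp only: diff_divide_distrib[symmetric]) simp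
    then show ?thesis by simp
  qed
  finally show ?thesis .
qed

lemma D_nz: "(q::complex) \<noteq> 0 \<Longrightarrow> q - inverse q \<noteq> 0 \<Longrightarrow> q * q \<noteq> 1"
  using inverse_unique[of q q] by auto

lemma qint_Suc: "q \<noteq> 0 \<Longrightarrow> q - inverse q \<noteq> 0 \<Longrightarrow> qint q (Suc b) = inverse q ^ b + q * qint q b"
  using D_nz[of q] unfolding qint_def by (simp add: field_simps power_inverse)

lemma qint_Suc2: "q \<noteq> 0 \<Longrightarrow> q - inverse q \<noteq> 0 \<Longrightarrow> qint q (Suc a) = q ^ a + inverse q * qint q a"
  using D_nz[of q] unfolding qint_def by (simp add: field_simps power_inverse)

lemma qint_0[simp]: "qint q 0 = 0" by (simp add: qint_def)
lemma qint_1: "q - inverse q \<noteq> 0 \<Longrightarrow> qint q (Suc 0) = 1" by (simp add: qint_def)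

lemma sc_lcomm_pow: "x ^ n * (sc s * y) = sc s * (x ^ n * (y::fa))"
  by (rule sc_lcomm)
lemma pow_lcomm: "x ^ n * (x * y) = x * (x ^ n * (y::fa))"
  by (simp add: mult.assoc[symmetric] power_commutes)
lemma pow_comm1: "x ^ n * x = x * (x ^ n::fa)"
  by (simp add: power_commutes)

lemma E1F3pow:
  assumes q: "q \<noteq> 0" and D: "q - inverse q \<noteq> 0"
  shows "cg q (E1 * F3 q ^ b) (F3 q ^ b * E1 + sc (qint q b) * (F2 * F3 q ^ (b - 1) * K1i))"
proof (induction b)
  case 0 then show ?case by simp
next
  case (Suc b)
  have F3F2b: "cg q (F3 q ^ b * F2) (sc (inverse q ^ b) * (F2 * F3 q ^ b))"
    using qc_pow_left[OF qF3F2[OF q], of b] unfolding qc_def .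
  have K1iF3: "cg q (K1i * F3 q) (sc q * (F3 q * K1i))" using qK1iF3[OF q] unfolding qc_def .
  have "E1 * F3 q ^ Suc b = (E1 * F3 q ^ b) * F3 q" by (simp only: power_Suc2 mult.assoc)
  also have "cg q \<dots> ((F3 q ^ b * E1 + sc (qint q b) * (F2 * F3 q ^ (b - 1) * K1i)) * F3 q)"
    by (rule cg_rmult[OF Suc.IH])
  also have "\<dots> = F3 q ^ b * (E1 * F3 q) + sc (qint q b) * (F2 * F3 q ^ (b - 1) * (K1i * F3 q))"
    by (simp add: algebra_simps)
  also have "cg q \<dots> (F3 q ^ b * (F3 q * E1 + F2 * K1i) + sc (qint q b) * (F2 * F3 q ^ (b - 1) * (sc q * (F3 q * K1i))))"
    by (intro cg_add cg_lmult E1F3[OF q D] K1iF3)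
  also have "\<dots> = F3 q ^ Suc b * E1 + (F3 q ^ b * F2) * K1i + sc (q * qint q b) * (F2 * (F3 q ^ (b - 1) * F3 q) * K1i)"
    by (simp add: algebra_simps sc_mult2 sc_lcomm[of F2] sc_lcomm_pow pow_lcomm)
  also have "cg q \<dots> (F3 q ^ Suc b * E1 + (sc (inverse q ^ b) * (F2 * F3 q ^ b)) * K1i + sc (q * qint q b) * (F2 * (F3 q ^ (b - 1) * F3 q) * K1i))"
    by (intro cg_add cg_rmult F3F2b cg_refl)
  also have "\<dots> = F3 q ^ Suc b * E1 + sc (qint q (Suc b)) * (F2 * F3 q ^ (Suc b - 1) * K1i)"
  proof (cases b)
    case 0 then show ?thesis by (simp add: qint_1[OF D])
  next
    case (Suc b')
    have "F3 q ^ (b - 1) * F3 q = F3 q ^ b" using Suc by (simp add: power_commutes)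
    then show ?thesis
      by (simp add: qint_Suc[OF q D] sc_add[symmetric] algebra_simps sc_mult2)
  qed
  finally show ?case .
qed

lemma F1F2pow:
  assumes q: "q \<noteq> 0" and D: "q - inverse q \<noteq> 0"
  shows "cg q (F1 * F2 ^ a) (sc (q ^ a) * (F2 ^ a * F1) + sc (qint q a) * (F2 ^ (a - 1) * F3 q))"
proof (induction a)
  case 0 then show ?case by simp
next
  case (Suc a)
  have F3F2: "cg q (F3 q * F2) (sc (inverse q) * (F2 * F3 q))" using qF3F2[OF q] unfolding qc_def .
  have F1F2: "F1 * F2 = F3 q + sc q * (F2 * F1)" by (simp add: F3_alt)
  have "F1 * F2 ^ Suc a = (F1 * F2 ^ a) * F2" by (simp only: power_Suc2 mult.assoc)
  also have "cg q \<dots> ((sc (q ^ a) * (F2 ^ a * F1) + sc (qint q a) * (F2 ^ (a - 1) * F3 q)) * F2)"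
    by (rule cg_rmult[OF Suc.IH])
  also have "\<dots> = sc (q ^ a) * (F2 ^ a * (F1 * F2)) + sc (qint q a) * (F2 ^ (a - 1) * (F3 q * F2))"
    by (simp add: algebra_simps)
  also have "cg q \<dots> (sc (q ^ a) * (F2 ^ a * (F1 * F2)) + sc (qint q a) * (F2 ^ (a - 1) * (sc (inverse q) * (F2 * F3 q))))"
    by (intro cg_add cg_lmult F3F2 cg_refl)
  also have "\<dots> = sc (q ^ Suc a) * (F2 ^ Suc a * F1) + sc (q ^ a) * (F2 ^ a * F3 q) + sc (qint q a * inverse q) * ((F2 ^ (a - 1) * F2) * F3 q)"
    by (simp add: F1F2 algebra_simps sc_mult2 sc_lcomm_pow pow_lcomm mult.commute)
  also have "\<dots> = sc (q ^ Suc a) * (F2 ^ Suc a * F1) + sc (qint q (Suc a)) * (F2 ^ (Suc a - 1) * F3 q)"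
  proof (cases a)
    case 0 then show ?thesis by (simp add: qint_1[OF D])
  next
    case (Suc b')
    have "F2 ^ (a - 1) * F2 = F2 ^ a" using Suc by (simp add: power_commutes)
    then show ?thesis
      by (simp add: qint_Suc2[OF q D] sc_add[symmetric] algebra_simps sc_mult2 mult.commute)
  qed
  finally show ?case .
qed


section \<open>The module\<close>

lemma Nsub_uminus: "x \<in> Nsub q \<alpha> \<kappa> c \<Longrightarrow> - x \<in> Nsub q \<alpha> \<kappa> c"
  using Nsub.lmult[of x q \<alpha> \<kappa> c "-1"] by simp
lemma Nsub_diff: "x \<in> Nsub q \<alpha> \<kappa> c \<Longrightarrow> y \<in> Nsub q \<alpha> \<kappa> c \<Longrightarrow> x - y \<in> Nsub q \<alpha> \<kappa> c"
  using Nsub.add[of x q \<alpha> \<kappa> c "-y"] Nsub_uminus by simp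
lemma eqV_scale: "eqV q \<alpha> \<kappa> c x y \<Longrightarrow> eqV q \<alpha> \<kappa> c (sc a * x) (sc a * y)"
  by (rule eqV_lmult)
lemma eqV_diff: "eqV q \<alpha> \<kappa> c a b \<Longrightarrow> eqV q \<alpha> \<kappa> c a' b' \<Longrightarrow> eqV q \<alpha> \<kappa> c (a - a') (b - b')"
  unfolding eqV_def using Nsub_diff by (fastforce simp: algebra_simps)
lemma eqV_eq: "x = y \<Longrightarrow> eqV q \<alpha> \<kappa> c x y" by simp

lemma Kalg_1: "1 \<in> Kalg q" using Kalg.intros(1)[of 1 q] by simp
lemma Kalg_0: "0 \<in> Kalg q" using Kalg.intros(1)[of 0 q] by simp

lemma J_Kel: "Kel - sc \<kappa> \<in> Jideal q \<kappa> c"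
  unfolding Jideal_def using Kalg_1 Kalg_0 by force
lemma J_C1: "C1 q - sc c \<in> Jideal q \<kappa> c"
  unfolding Jideal_def using Kalg_1 Kalg_0 by force

definition w :: "complex \<Rightarrow> nat \<Rightarrow> nat \<Rightarrow> nat \<Rightarrow> fa" where
  "w q a b y = F2 ^ a * F3 q ^ b * K2 ^ y"

locale setting =
  fixes q \<alpha> \<kappa> c :: complex
  assumes q0: "q \<noteq> 0" and D0: "q - inverse q \<noteq> 0" and a0: "\<alpha> \<noteq> 0" and k0: "\<kappa> \<noteq> 0"
begin

abbreviation ev where "ev \<equiv> eqV q \<alpha> \<kappa> c"

lemma N_E1: "ev (x * E1) (sc \<alpha> * x)"
proof -
  have "x * (E1 - sc \<alpha>) \<in> Nsub q \<alpha> \<kappa> c" by (intro Nsub.lmult Nsub.eta1)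
  then show ?thesis unfolding eqV_def by (simp add: algebra_simps sc_comm)
qed

lemma N_Kel: "ev (x * Kel) (sc \<kappa> * x)"
proof -
  have "x * (Kel - sc \<kappa>) \<in> Nsub q \<alpha> \<kappa> c" by (intro Nsub.lmult Nsub.J J_Kel)
  then show ?thesis unfolding eqV_def by (simp add: algebra_simps sc_comm)
qed

lemma N_C1: "ev (x * C1 q) (sc c * x)"
proof -
  have "x * (C1 q - sc c) \<in> Nsub q \<alpha> \<kappa> c" by (intro Nsub.lmult Nsub.J J_C1)
  then show ?thesis unfolding eqV_def by (simp add: algebra_simps sc_comm)
qed

lemma KinvKel: "cg q (Kinv * Kel) 1"
proof -
  have A: "cg q (K2i * K1) (K1 * K2i)" using qK2iK1[of q] by (simp add: qc_def)
  have B: "cg q (K2i * (K2i * (K2 * K2))) 1"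
  proof -
    have "K2i * (K2i * (K2 * K2)) = K2i * (K2i * K2) * K2" by (simp add: mult.assoc)
    also have "cg q \<dots> (K2i * 1 * K2)" by (intro cg_ctx K2iK2)
    also have "cg q (K2i * 1 * K2) 1" using K2iK2 by simp
    finally show ?thesis .
  qed
  have "Kinv * Kel = K1i * (K2i * (K2i * K1) * (K2 * K2))" by (simp add: Kinv_def Kel_def mult.assoc power2_eq_square)
  also have "cg q \<dots> (K1i * (K2i * (K1 * K2i) * (K2 * K2)))" by (intro cg_ctx cg_lmult A)
  also have "K1i * (K2i * (K1 * K2i) * (K2 * K2)) = K1i * (K2i * K1) * (K2i * (K2 * K2))" by (simp add: mult.assoc)
  also have "cg q \<dots> (K1i * (K1 * K2i) * (K2i * (K2 * K2)))" by (intro cg_ctx A)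
  also have "K1i * (K1 * K2i) * (K2i * (K2 * K2)) = (K1i * K1) * (K2i * (K2i * (K2 * K2)))" by (simp add: mult.assoc)
  also have "cg q \<dots> (1 * 1)" by (intro cg_mult K1iK1 B)
  finally show ?thesis by simp
qed

lemma N_Kinv: "ev (x * Kinv) (sc (inverse \<kappa>) * x)"
proof -
  have A: "x * Kinv * (Kel - sc \<kappa>) \<in> Nsub q \<alpha> \<kappa> c" by (intro Nsub.lmult Nsub.J J_Kel)
  have B: "x * (Kinv * Kel - 1) \<in> Nsub q \<alpha> \<kappa> c"
    using Iq_Nsub[OF Iq_lmult[of "Kinv * Kel - 1" q x]] KinvKel unfolding cg_def by blast
  have "x * Kinv - sc (inverse \<kappa>) * x = sc (inverse \<kappa>) * (x * (Kinv * Kel - 1)) - sc (inverse \<kappa>) * (x * Kinv * (Kel - sc \<kappa>))"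
    using k0 by (simp add: algebra_simps sc_lcomm[of x] sc_lcomm[of "x * Kinv"] sc_mult2 mult.assoc sc_comm)
  also have "\<dots> \<in> Nsub q \<alpha> \<kappa> c" by (rule Nsub_diff[OF Nsub.lmult[OF B] Nsub.lmult[OF A]])
  finally show ?thesis unfolding eqV_def .
qed


lemma K2sqKinv: "cg q (K2 ^ 2 * Kinv) K1i"
proof -
  have A: "cg q (K2 * K1i) (K1i * K2)" using qK2K1i[of q] by (simp add: qc_def)
  have "K2 ^ 2 * Kinv = K2 * (K2 * K1i) * (K2i * K2i)" by (simp add: Kinv_def mult.assoc power2_eq_square)
  also have "cg q \<dots> (K2 * (K1i * K2) * (K2i * K2i))" by (intro cg_ctx A)
  also have "K2 * (K1i * K2) * (K2i * K2i) = (K2 * K1i) * ((K2 * K2i) * K2i)" by (simp add: mult.assoc)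
  also have "cg q \<dots> ((K1i * K2) * (1 * K2i))" by (intro cg_mult A cg_rmult K2K2i)
  also have "(K1i * K2) * (1 * K2i) = K1i * (K2 * K2i)" by (simp add: mult.assoc)
  also have "cg q \<dots> (K1i * 1)" by (intro cg_lmult K2K2i)
  finally show ?thesis by simp
qed

lemma N_K1i: "ev (x * K1i) (sc (inverse \<kappa>) * (x * K2 ^ 2))"
proof -
  have "cg q (x * K1i) ((x * K2 ^ 2) * Kinv)" using cg_lmult[OF cg_sym[OF K2sqKinv], of x] by (simp add: mult.assoc)
  also have "ev \<dots> (sc (inverse \<kappa>) * (x * K2 ^ 2))" by (rule N_Kinv)
  finally show ?thesis .
qed

lemma N_F1: "ev (x * F1) (sc (c / \<alpha>) * x - sc (q / (\<alpha> * (q - inverse q)^2)) * (x * K1)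
                              - sc (inverse q / (\<alpha> * (q - inverse q)^2)) * (x * K1i))"
proof -
  have A: "x * (C1 q - sc c) \<in> Nsub q \<alpha> \<kappa> c" by (intro Nsub.lmult Nsub.J J_C1)
  have B: "x * F1 * (E1 - sc \<alpha>) \<in> Nsub q \<alpha> \<kappa> c" by (intro Nsub.lmult Nsub.eta1)
  have "x * F1 - (sc (c / \<alpha>) * x - sc (q / (\<alpha> * (q - inverse q)^2)) * (x * K1)
                              - sc (inverse q / (\<alpha> * (q - inverse q)^2)) * (x * K1i))
        = sc (inverse \<alpha>) * (x * (C1 q - sc c) - x * F1 * (E1 - sc \<alpha>))"
    using a0 by (simp add: C1_def algebra_simps sc_lcomm[of x] sc_lcomm[of "x * F1"] sc_mult2 sc_comm mult.assoc
        sc_diff[symmetric] sc_add[symmetric] divide_inverse)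
  also have "\<dots> \<in> Nsub q \<alpha> \<kappa> c" by (intro Nsub.lmult Nsub_diff A B)
  finally show ?thesis unfolding eqV_def .
qed


lemma w_K2: "w q a b y * K2 ^ 2 = w q a b (y + 2)"
  unfolding w_def by (simp only: mult.assoc power_add)

lemma WE: "ev (E1 * w q a b y) (sc (\<alpha> * q ^ y) * w q a b y + sc (qint q b * inverse \<kappa>) * w q (a + 1) (b - 1) (y + 2))"
proof -
  have e1: "cg q (E1 * F2 ^ a) (F2 ^ a * E1)" using qc_pow_right[OF qE1F2, of q a] by (simp add: qc_def)
  have e2: "cg q (E1 * K2 ^ y) (sc (q ^ y) * (K2 ^ y * E1))" using qc_pow_right[OF qE1K2[OF q0], of y] by (simp add: qc_def)
  have e3: "cg q (K1i * K2 ^ y) (K2 ^ y * K1i)" using qc_pow_right[OF qK1iK2, of q y] by (simp add: qc_def)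
  have "E1 * w q a b y = (E1 * F2 ^ a) * F3 q ^ b * K2 ^ y" by (simp add: w_def mult.assoc)
  also have "cg q \<dots> ((F2 ^ a * E1) * F3 q ^ b * K2 ^ y)" by (intro cg_rmult e1)
  also have "(F2 ^ a * E1) * F3 q ^ b * K2 ^ y = F2 ^ a * (E1 * F3 q ^ b) * K2 ^ y" by (simp add: mult.assoc)
  also have "cg q \<dots> (F2 ^ a * (F3 q ^ b * E1 + sc (qint q b) * (F2 * F3 q ^ (b - 1) * K1i)) * K2 ^ y)"
    by (intro cg_ctx E1F3pow q0 D0)
  also have "\<dots> = F2 ^ a * F3 q ^ b * (E1 * K2 ^ y) + sc (qint q b) * (F2 ^ (a + 1) * F3 q ^ (b - 1) * (K1i * K2 ^ y))"
    by (simp add: algebra_simps sc_lcomm_pow sc_lcomm[of F2] pow_lcomm)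
  also have "cg q \<dots> (F2 ^ a * F3 q ^ b * (sc (q ^ y) * (K2 ^ y * E1)) + sc (qint q b) * (F2 ^ (a + 1) * F3 q ^ (b - 1) * (K2 ^ y * K1i)))"
    by (intro cg_add cg_lmult e2 e3)
  also have "\<dots> = sc (q ^ y) * (w q a b y * E1) + sc (qint q b) * (w q (a + 1) (b - 1) y * K1i)"
    by (simp add: w_def mult.assoc sc_lcomm_pow)
  also have "ev \<dots> (sc (q ^ y) * (sc \<alpha> * w q a b y) + sc (qint q b) * (sc (inverse \<kappa>) * (w q (a + 1) (b - 1) y * K2 ^ 2)))"
    by (intro eqV_add eqV_lmult N_E1 N_K1i)
  also have "\<dots> = sc (\<alpha> * q ^ y) * w q a b y + sc (qint q b * inverse \<kappa>) * w q (a + 1) (b - 1) (y + 2)"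
    by (simp add: w_K2 sc_mult2 mult.commute)
  finally show ?thesis .
qed


lemma WF0: "cg q (F1 * w q a b y) (sc (q ^ a * inverse q ^ b * inverse q ^ y) * (w q a b y * F1) + sc (qint q a) * w q (a - 1) (b + 1) y)"
proof -
  have f1: "cg q (F1 * F3 q ^ b) (sc (inverse q ^ b) * (F3 q ^ b * F1))"
    using qc_pow_right[OF qF1F3[OF q0], of b] by (simp add: qc_def)
  have f2: "cg q (F1 * K2 ^ y) (sc (inverse q ^ y) * (K2 ^ y * F1))"
    using qc_pow_right[OF qF1K2[OF q0], of y] by (simp add: qc_def)
  have "F1 * w q a b y = (F1 * F2 ^ a) * F3 q ^ b * K2 ^ y" by (simp add: w_def mult.assoc)
  also have "cg q \<dots> ((sc (q ^ a) * (F2 ^ a * F1) + sc (qint q a) * (F2 ^ (a - 1) * F3 q)) * F3 q ^ b * K2 ^ y)"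
    by (intro cg_rmult F1F2pow q0 D0)
  also have "\<dots> = sc (q ^ a) * (F2 ^ a * (F1 * F3 q ^ b) * K2 ^ y) + sc (qint q a) * w q (a - 1) (b + 1) y"
    by (simp add: w_def algebra_simps)
  also have "cg q \<dots> (sc (q ^ a) * (F2 ^ a * (sc (inverse q ^ b) * (F3 q ^ b * F1)) * K2 ^ y) + sc (qint q a) * w q (a - 1) (b + 1) y)"
    by (intro cg_add cg_lmult cg_rmult f1 cg_refl)
  also have "\<dots> = sc (q ^ a * inverse q ^ b) * (F2 ^ a * F3 q ^ b * (F1 * K2 ^ y)) + sc (qint q a) * w q (a - 1) (b + 1) y"
    by (simp add: mult.assoc sc_lcomm_pow sc_mult2)
  also have "cg q \<dots> (sc (q ^ a * inverse q ^ b) * (F2 ^ a * F3 q ^ b * (sc (inverse q ^ y) * (K2 ^ y * F1))) + sc (qint q a) * w q (a - 1) (b + 1) y)"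
    by (intro cg_add cg_lmult f2 cg_refl)
  also have "\<dots> = sc (q ^ a * inverse q ^ b * inverse q ^ y) * (w q a b y * F1) + sc (qint q a) * w q (a - 1) (b + 1) y"
    by (simp add: w_def mult.assoc sc_lcomm_pow sc_mult2)
  finally show ?thesis .
qed

lemma qc_w: "qc q X F2 s1 \<Longrightarrow> qc q X (F3 q) s2 \<Longrightarrow> qc q X K2 s3 \<Longrightarrow> qc q X (w q a b y) (s1 ^ a * s2 ^ b * s3 ^ y)"
  unfolding w_def by (intro qc_mult_right qc_pow_right)

lemma WK1: "cg q (K1 * w q a b y) (sc (q ^ a * inverse q ^ b) * (w q a b y * K1))"
  using qc_w[OF qK1F2 qK1F3[OF q0] qK1K2, of a b y] by (simp add: qc_def)

lemma WK1i: "ev (K1i * w q a b y) (sc (inverse q ^ a * q ^ b * inverse \<kappa>) * w q a b (y + 2))"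
proof -
  have "cg q (K1i * w q a b y) (sc (inverse q ^ a * q ^ b) * (w q a b y * K1i))"
    using qc_w[OF qK1iF2[OF q0] qK1iF3[OF q0] qK1iK2, of a b y] by (simp add: qc_def)
  also have "ev \<dots> (sc (inverse q ^ a * q ^ b) * (sc (inverse \<kappa>) * (w q a b y * K2 ^ 2)))"
    by (intro eqV_lmult N_K1i)
  also have "\<dots> = sc (inverse q ^ a * q ^ b * inverse \<kappa>) * w q a b (y + 2)"
    by (simp add: w_K2 sc_mult2)
  finally show ?thesis .
qed

lemma WKel: "ev (Kel * w q a b y) (sc (inverse q ^ (3 * (a + b)) * \<kappa>) * w q a b y)"
proof -
  have "cg q (Kel * w q a b y) (sc ((inverse q ^ 3) ^ a * (inverse q ^ 3) ^ b * 1 ^ y) * (w q a b y * Kel))"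
    using qc_w[OF qKelF2[OF q0] qKelF3[OF q0] qKelK2, of a b y] by (simp add: qc_def)
  also have "ev \<dots> (sc ((inverse q ^ 3) ^ a * (inverse q ^ 3) ^ b * 1 ^ y) * (sc \<kappa> * w q a b y))"
    by (intro eqV_lmult N_Kel)
  also have "\<dots> = sc (inverse q ^ (3 * (a + b)) * \<kappa>) * w q a b y"
    by (simp add: sc_mult2 power_mult[symmetric] power_add mult.commute)
  finally show ?thesis .
qed

lemma Wshift: "ev (w q a b (y + 2) * K1) (sc \<kappa> * w q a b y)"
proof -
  have A: "cg q (K2 ^ 2 * K1) (K1 * K2 ^ 2)" using qc_pow_left[OF qK2K1, of q 2] by (simp add: qc_def)
  have "w q a b (y + 2) * K1 = w q a b y * (K2 ^ 2 * K1)" by (simp only: w_K2[symmetric] mult.assoc)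
  also have "cg q \<dots> (w q a b y * Kel)" unfolding Kel_def by (intro cg_lmult A)
  also have "ev \<dots> (sc \<kappa> * w q a b y)" by (rule N_Kel)
  finally show ?thesis .
qed


lemma WF1: "ev (w q a b y * F1) (sc (c / \<alpha>) * w q a b y - sc (q / (\<alpha> * (q - inverse q)^2)) * (w q a b y * K1)
                 - sc (inverse q * inverse \<kappa> / (\<alpha> * (q - inverse q)^2)) * w q a b (y + 2))"
proof -
  have "ev (w q a b y * F1) (sc (c / \<alpha>) * w q a b y - sc (q / (\<alpha> * (q - inverse q)^2)) * (w q a b y * K1)
                              - sc (inverse q / (\<alpha> * (q - inverse q)^2)) * (w q a b y * K1i))" by (rule N_F1)
  also have "ev \<dots> (sc (c / \<alpha>) * w q a b y - sc (q / (\<alpha> * (q - inverse q)^2)) * (w q a b y * K1)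
                              - sc (inverse q / (\<alpha> * (q - inverse q)^2)) * (sc (inverse \<kappa>) * (w q a b y * K2 ^ 2)))"
    by (intro eqV_diff eqV_refl eqV_lmult N_K1i)
  also have "\<dots> = sc (c / \<alpha>) * w q a b y - sc (q / (\<alpha> * (q - inverse q)^2)) * (w q a b y * K1)
                 - sc (inverse q * inverse \<kappa> / (\<alpha> * (q - inverse q)^2)) * w q a b (y + 2)"
    by (simp add: w_K2 sc_mult2)
  finally show ?thesis .
qed

lemma WF2: "ev (w q a b (y + 2) * F1) (sc (c / \<alpha>) * w q a b (y + 2) - sc (q * \<kappa> / (\<alpha> * (q - inverse q)^2)) * w q a b y
                 - sc (inverse q * inverse \<kappa> / (\<alpha> * (q - inverse q)^2)) * w q a b (y + 4))"
proof -
  have "ev (w q a b (y + 2) * F1) (sc (c / \<alpha>) * w q a b (y + 2) - sc (q / (\<alpha> * (q - inverse q)^2)) * (w q a b (y + 2) * K1)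
                 - sc (inverse q * inverse \<kappa> / (\<alpha> * (q - inverse q)^2)) * w q a b (y + 2 + 2))" by (rule WF1)
  also have "ev \<dots> (sc (c / \<alpha>) * w q a b (y + 2) - sc (q / (\<alpha> * (q - inverse q)^2)) * (sc \<kappa> * w q a b y)
                 - sc (inverse q * inverse \<kappa> / (\<alpha> * (q - inverse q)^2)) * w q a b (y + 2 + 2))"
    by (intro eqV_diff eqV_refl eqV_lmult Wshift)
  also have "\<dots> = sc (c / \<alpha>) * w q a b (y + 2) - sc (q * \<kappa> / (\<alpha> * (q - inverse q)^2)) * w q a b y
                 - sc (inverse q * inverse \<kappa> / (\<alpha> * (q - inverse q)^2)) * w q a b (y + 4)"
    by (simp only: sc_mult2 mult.commute add.assoc numeral_plus_numeral semiring_norm times_divide_eq_right)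
  finally show ?thesis .
qed

lemma WF0s: "cg q (sc (qint q b * t) * (F1 * w q (a + 1) (b - 1) (y + 2)))
   (sc (qint q b * t) * (sc (q ^ a * inverse q ^ b * inverse q ^ y) * (w q (a + 1) (b - 1) (y + 2) * F1) + sc (qint q (a + 1)) * w q a b (y + 2)))"
proof (cases b)
  case 0 then show ?thesis by simp
next
  case (Suc b')
  have "q ^ (a + 1) * inverse q ^ b' * inverse q ^ (y + 2) = q ^ a * inverse q ^ b * inverse q ^ y"
    using Suc q0 by (simp add: field_simps)
  moreover have "b - 1 = b'" "b' + 1 = b" "a + 1 - 1 = a" using Suc by simp_all
  ultimately show ?thesis using WF0[of "a + 1" b' "y + 2"] by (intro cg_lmult) (simp only:)
qed

end

lemma regroup:
  fixes W0 WK W2 W3 W4 W5 W6 :: fa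
  shows "sc e1 * (sc Q * (sc g1 * W0 - sc g2 * WK - sc g3 * W2) + sc g4 * W3)
   + sc e2 * (sc Q * (sc g1 * W4 - sc g5 * W5 - sc g3 * W6) + sc g6 * W2)
   + sc h1 * (sc k1 * WK) + sc h2 * (sc k2 * W2)
   = sc (e1 * Q * g1) * W0 + sc (h2 * k2 + e2 * g6 - e1 * Q * g3) * W2 + sc (e1 * g4) * W3
     + sc (e2 * Q * g1) * W4 - sc (e2 * Q * g5) * W5 - sc (e2 * Q * g3) * W6 + sc (h1 * k1 - e1 * Q * g2) * WK"
  by (simp add: algebra_simps sc_mult2 sc_add[symmetric] sc_diff[symmetric])


lemma split_h: "A + B + sc h * (sc s1 * X + sc s2 * Y) = A + B + sc (h * s1) * X + sc (h * s2) * (Y::fa)"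
  by (simp add: distrib_left sc_mult2 add.assoc)

context setting begin

lemma C1W_raw:
  fixes a b y :: nat
  defines "d \<equiv> (q - inverse q)^2"
  defines "Q \<equiv> q ^ a * inverse q ^ b * inverse q ^ y"
  shows "ev (C1 q * w q a b y)
   (sc (\<alpha> * q ^ y * Q * (c / \<alpha>)) * w q a b y
   + sc (1 / d * inverse q * (inverse q ^ a * q ^ b * inverse \<kappa>) + qint q b * inverse \<kappa> * qint q (a + 1)
         - \<alpha> * q ^ y * Q * (inverse q * inverse \<kappa> / (\<alpha> * d))) * w q a b (y + 2)
   + sc (\<alpha> * q ^ y * qint q a) * w q (a - 1) (b + 1) y
   + sc (qint q b * inverse \<kappa> * Q * (c / \<alpha>)) * w q (a + 1) (b - 1) (y + 2)
   - sc (qint q b * inverse \<kappa> * Q * (q * \<kappa> / (\<alpha> * d))) * w q (a + 1) (b - 1) y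
   - sc (qint q b * inverse \<kappa> * Q * (inverse q * inverse \<kappa> / (\<alpha> * d))) * w q (a + 1) (b - 1) (y + 4)
   + sc (1 / d * q * (q ^ a * inverse q ^ b) - \<alpha> * q ^ y * Q * (q / (\<alpha> * d))) * (w q a b y * K1))"
proof -
  let ?W0 = "w q a b y" and ?WK = "w q a b y * K1" and ?W2 = "w q a b (y + 2)" and ?W3 = "w q (a - 1) (b + 1) y"
  let ?W4 = "w q (a + 1) (b - 1) (y + 2)" and ?W5 = "w q (a + 1) (b - 1) y" and ?W6 = "w q (a + 1) (b - 1) (y + 4)"
  have "C1 q * w q a b y = F1 * (E1 * ?W0) + sc (1 / d) * (sc q * (K1 * ?W0) + sc (inverse q) * (K1i * ?W0))"
    by (simp add: C1_def d_def algebra_simps)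
  also have "ev \<dots> (F1 * (sc (\<alpha> * q ^ y) * ?W0 + sc (qint q b * inverse \<kappa>) * ?W4)
       + sc (1 / d) * (sc q * (sc (q ^ a * inverse q ^ b) * ?WK) + sc (inverse q) * (sc (inverse q ^ a * q ^ b * inverse \<kappa>) * ?W2)))"
    by (intro eqV_add eqV_lmult WE WK1i cg_eqV WK1)
  also have "\<dots> = sc (\<alpha> * q ^ y) * (F1 * ?W0) + sc (qint q b * inverse \<kappa>) * (F1 * ?W4)
       + sc (1 / d) * (sc q * (sc (q ^ a * inverse q ^ b) * ?WK) + sc (inverse q) * (sc (inverse q ^ a * q ^ b * inverse \<kappa>) * ?W2))"
    by (simp add: distrib_left sc_lcomm[of F1])
  also have "cg q \<dots> (sc (\<alpha> * q ^ y) * (sc Q * (?W0 * F1) + sc (qint q a) * ?W3)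
       + sc (qint q b * inverse \<kappa>) * (sc Q * (?W4 * F1) + sc (qint q (a + 1)) * ?W2)
       + sc (1 / d) * (sc q * (sc (q ^ a * inverse q ^ b) * ?WK) + sc (inverse q) * (sc (inverse q ^ a * q ^ b * inverse \<kappa>) * ?W2)))"
    unfolding Q_def by (intro cg_add cg_lmult WF0 WF0s cg_refl)
  also have "ev \<dots> (sc (\<alpha> * q ^ y) * (sc Q * (sc (c / \<alpha>) * ?W0 - sc (q / (\<alpha> * d)) * ?WK - sc (inverse q * inverse \<kappa> / (\<alpha> * d)) * ?W2) + sc (qint q a) * ?W3)
       + sc (qint q b * inverse \<kappa>) * (sc Q * (sc (c / \<alpha>) * ?W4 - sc (q * \<kappa> / (\<alpha> * d)) * ?W5 - sc (inverse q * inverse \<kappa> / (\<alpha> * d)) * ?W6) + sc (qint q (a + 1)) * ?W2)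
       + sc (1 / d) * (sc q * (sc (q ^ a * inverse q ^ b) * ?WK) + sc (inverse q) * (sc (inverse q ^ a * q ^ b * inverse \<kappa>) * ?W2)))"
    unfolding d_def by (intro eqV_add eqV_lmult eqV_refl WF1 WF2)
  also have "\<dots> = sc (\<alpha> * q ^ y) * (sc Q * (sc (c / \<alpha>) * ?W0 - sc (q / (\<alpha> * d)) * ?WK - sc (inverse q * inverse \<kappa> / (\<alpha> * d)) * ?W2) + sc (qint q a) * ?W3)
       + sc (qint q b * inverse \<kappa>) * (sc Q * (sc (c / \<alpha>) * ?W4 - sc (q * \<kappa> / (\<alpha> * d)) * ?W5 - sc (inverse q * inverse \<kappa> / (\<alpha> * d)) * ?W6) + sc (qint q (a + 1)) * ?W2)
       + sc (1 / d * q) * (sc (q ^ a * inverse q ^ b) * ?WK) + sc (1 / d * inverse q) * (sc (inverse q ^ a * q ^ b * inverse \<kappa>) * ?W2)"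
    by (rule split_h)
  also have "\<dots> = sc (\<alpha> * q ^ y * Q * (c / \<alpha>)) * w q a b y
   + sc (1 / d * inverse q * (inverse q ^ a * q ^ b * inverse \<kappa>) + qint q b * inverse \<kappa> * qint q (a + 1)
         - \<alpha> * q ^ y * Q * (inverse q * inverse \<kappa> / (\<alpha> * d))) * w q a b (y + 2)
   + sc (\<alpha> * q ^ y * qint q a) * w q (a - 1) (b + 1) y
   + sc (qint q b * inverse \<kappa> * Q * (c / \<alpha>)) * w q (a + 1) (b - 1) (y + 2)
   - sc (qint q b * inverse \<kappa> * Q * (q * \<kappa> / (\<alpha> * d))) * w q (a + 1) (b - 1) y
   - sc (qint q b * inverse \<kappa> * Q * (inverse q * inverse \<kappa> / (\<alpha> * d))) * w q (a + 1) (b - 1) (y + 4)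
   + sc (1 / d * q * (q ^ a * inverse q ^ b) - \<alpha> * q ^ y * Q * (q / (\<alpha> * d))) * (w q a b y * K1)"
    by (rule regroup)
  finally show ?thesis .
qed

end


lemma powi_1plus: "x powi (1 + int n) = x * x ^ n"
proof -
  have "1 + int n = int (Suc n)" by simp
  then show ?thesis by (simp only: power_int_of_nat power_Suc)
qed

definition qiz :: "complex \<Rightarrow> int \<Rightarrow> complex" where
  "qiz q m = (q powi m - q powi (- m)) / (q - inverse q)"

lemma qint_qiz: "qint q n = qiz q (int n)"
  by (simp add: qint_def qiz_def power_int_minus power_inverse)

context setting begin

definition "dd = (q - inverse q)^2"
definition co1 :: "int \<Rightarrow> int \<Rightarrow> int \<Rightarrow> complex" where "co1 a b y = q powi (a - b) * c"
definition co2 :: "int \<Rightarrow> int \<Rightarrow> int \<Rightarrow> complex" where "co2 a b y = inverse \<kappa> * ((q powi (b - a - 1) - q powi (a - b - 1)) / dd + qiz q b * qiz q (a + 1))"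
definition co3 :: "int \<Rightarrow> int \<Rightarrow> int \<Rightarrow> complex" where "co3 a b y = \<alpha> * q powi y * qiz q a"
definition co4 :: "int \<Rightarrow> int \<Rightarrow> int \<Rightarrow> complex" where "co4 a b y = qiz q b * q powi (a - b - y) * c / (\<alpha> * \<kappa>)"
definition co5 :: "int \<Rightarrow> int \<Rightarrow> int \<Rightarrow> complex" where "co5 a b y = qiz q b * q powi (a - b - y + 1) / (\<alpha> * dd)"
definition co6 :: "int \<Rightarrow> int \<Rightarrow> int \<Rightarrow> complex" where "co6 a b y = qiz q b * q powi (a - b - y - 1) / (\<alpha> * \<kappa>^2 * dd)"

lemma powi_nat3: "q ^ a * inverse q ^ b * inverse q ^ y = q powi (int a - int b - int y)"
proof -
  have "q powi (int a - int b - int y) = q powi (int a - int (b + y))" by (rule arg_cong[where f="power_int q"]) simp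
  also have "\<dots> = q ^ a / q ^ (b + y)" by (simp only: power_int_diff[OF disjI1[OF q0]] power_int_of_nat)
  finally show ?thesis by (simp add: power_add field_simps power_inverse)
qed
lemma powi_nat2: "q ^ y * (q ^ a * inverse q ^ b * inverse q ^ y) = q powi (int a - int b)"
  using q0 by (simp add: power_int_diff field_simps power_inverse)

lemma dd_nz: "dd \<noteq> 0" using D0 by (simp add: dd_def)

lemma C1W:
  fixes a b y :: nat
  shows "ev (C1 q * w q a b y)
   (sc (co1 (int a) (int b) (int y)) * w q a b y + sc (co2 (int a) (int b) (int y)) * w q a b (y + 2) + sc (co3 (int a) (int b) (int y)) * w q (a - 1) (b + 1) y
   + sc (co4 (int a) (int b) (int y)) * w q (a + 1) (b - 1) (y + 2) - sc (co5 (int a) (int b) (int y)) * w q (a + 1) (b - 1) y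
   - sc (co6 (int a) (int b) (int y)) * w q (a + 1) (b - 1) (y + 4))"
proof -
  let ?Q = "q ^ a * inverse q ^ b * inverse q ^ y"
  have Q: "?Q = q powi (int a - int b - int y)" by (rule powi_nat3)
  have yQ: "q ^ y * ?Q = q powi (int a - int b)" by (rule powi_nat2)
  have x0: "\<alpha> * q ^ y * ?Q * (c / \<alpha>) = co1 (int a) (int b) (int y)"
  proof -
    have "\<alpha> * q ^ y * ?Q * (c / \<alpha>) = (q ^ y * ?Q) * c" using a0 by (simp add: field_simps)
    then show ?thesis unfolding co1_def yQ .
  qed
  have x2: "1 / dd * inverse q * (inverse q ^ a * q ^ b * inverse \<kappa>) + qint q b * inverse \<kappa> * qint q (a + 1)
         - \<alpha> * q ^ y * ?Q * (inverse q * inverse \<kappa> / (\<alpha> * dd)) = co2 (int a) (int b) (int y)"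
  proof -
    have e1: "inverse q * (inverse q ^ a * q ^ b) = q powi (int b - int a - 1)"
    proof -
      have "q powi (int b - int a - 1) = q powi (int b - int (a + 1))" by (rule arg_cong[where f="power_int q"]) simp
      also have "\<dots> = q ^ b / q ^ (a + 1)" by (simp only: power_int_diff[OF disjI1[OF q0]] power_int_of_nat)
      finally show ?thesis using q0 by (simp add: field_simps power_inverse)
    qed
    have e2: "q ^ y * ?Q * inverse q = q powi (int a - int b - 1)"
      using q0 yQ by (simp add: power_int_diff field_simps powi_1plus)
    show ?thesis unfolding co2_def qint_qiz
      using a0 k0 dd_nz q0 e1 e2 by (simp add: field_simps)
  qed
  have x3: "\<alpha> * q ^ y * qint q a = co3 (int a) (int b) (int y)" by (simp add: co3_def qint_qiz)
  have x4: "qint q b * inverse \<kappa> * ?Q * (c / \<alpha>) = co4 (int a) (int b) (int y)"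
    unfolding co4_def qint_qiz Q using a0 k0 by (simp add: field_simps)
  have x5: "qint q b * inverse \<kappa> * ?Q * (q * \<kappa> / (\<alpha> * dd)) = co5 (int a) (int b) (int y)"
  proof -
    have e: "?Q * q = q powi (int a - int b - int y + 1)" using Q q0 by (simp add: power_int_add)
    have "qint q b * inverse \<kappa> * ?Q * (q * \<kappa> / (\<alpha> * dd)) = qint q b * (?Q * q) / (\<alpha> * dd)"
      using k0 by (simp add: field_simps)
    then show ?thesis unfolding co5_def qint_qiz e .
  qed
  have x6: "qint q b * inverse \<kappa> * ?Q * (inverse q * inverse \<kappa> / (\<alpha> * dd)) = co6 (int a) (int b) (int y)"
  proof -
    have e: "?Q * inverse q = q powi (int a - int b - int y - 1)"
      unfolding Q power_int_diff[OF disjI1[OF q0], of "int a - int b - int y" 1] by (simp only: divide_inverse power_int_1_right)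
    have "qint q b * inverse \<kappa> * ?Q * (inverse q * inverse \<kappa> / (\<alpha> * dd)) = qint q b * (?Q * inverse q) / (\<alpha> * \<kappa>^2 * dd)"
      using k0 by (simp add: field_simps power2_eq_square)
    then show ?thesis unfolding co6_def qint_qiz e .
  qed
  have xk: "1 / dd * q * (q ^ a * inverse q ^ b) - \<alpha> * q ^ y * ?Q * (q / (\<alpha> * dd)) = 0"
    using a0 q0 dd_nz by (simp add: field_simps)
  show ?thesis using C1W_raw[of a b y] x0 x2 x3 x4 x5 x6 xk unfolding dd_def by simp
qed

end


context setting begin

lemma N_Kinv_pow: "ev (x * Kinv ^ m) (sc (inverse \<kappa> ^ m) * x)"
proof (induction m arbitrary: x)
  case 0 then show ?case by simp
next
  case (Suc m)
  have "x * Kinv ^ Suc m = (x * Kinv) * Kinv ^ m" by (simp add: mult.assoc)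
  also have "ev \<dots> (sc (inverse \<kappa> ^ m) * (x * Kinv))" by (rule Suc.IH)
  also have "ev \<dots> (sc (inverse \<kappa> ^ m) * (sc (inverse \<kappa>) * x))" by (intro eqV_lmult N_Kinv)
  also have "\<dots> = sc (inverse \<kappa> ^ Suc m) * x" by (simp add: sc_mult2 mult.commute)
  finally show ?case .
qed

definition Aco :: "nat \<Rightarrow> int \<Rightarrow> int \<Rightarrow> complex" where
  "Aco n k j = (if 0 \<le> k \<and> 0 \<le> j \<and> k + j \<le> int n then acoef q \<alpha> n (nat k) (nat j) * inverse \<kappa> ^ nat (2 * j + k) else 0)"

definition Wz :: "nat \<Rightarrow> int \<Rightarrow> int \<Rightarrow> fa" where
  "Wz n k j = w q (nat (int n - k)) (nat k) (nat (2 * j))"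

definition Box :: "nat \<Rightarrow> (int \<times> int) set" where
  "Box n = {-3 .. int n + 3} \<times> {-3 .. int n + 3}"

definition Uz :: "nat \<Rightarrow> fa" where
  "Uz n = (\<Sum>(k, j) \<in> Box n. sc (Aco n k j) * Wz n k j)"

lemma U1: "ev (u01 q \<alpha> n) (Uz n)"
proof -
  define g where "g = (\<lambda>k j. sc (acoef q \<alpha> n k j * inverse \<kappa> ^ (2 * j + k)) * w q (n - k) k (2 * j))"
  have "ev (u01 q \<alpha> n) (\<Sum>k\<in>{0..n}. \<Sum>j\<in>{0..n-k}. g k j)"
    unfolding u01_def g_def
  proof (intro eqV_sum)
    fix k j
    have "sc (acoef q \<alpha> n k j) * F2 ^ (n - k) * F3 q ^ k * K2 ^ (2 * j) * Kinv ^ (2 * j + k)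
       = sc (acoef q \<alpha> n k j) * (w q (n - k) k (2 * j) * Kinv ^ (2 * j + k))" by (simp add: w_def mult.assoc)
    also have "ev \<dots> (sc (acoef q \<alpha> n k j) * (sc (inverse \<kappa> ^ (2 * j + k)) * w q (n - k) k (2 * j)))"
      by (intro eqV_lmult N_Kinv_pow)
    also have "\<dots> = sc (acoef q \<alpha> n k j * inverse \<kappa> ^ (2 * j + k)) * w q (n - k) k (2 * j)" by (simp add: sc_mult2)
    finally show "ev (sc (acoef q \<alpha> n k j) * F2 ^ (n - k) * F3 q ^ k * K2 ^ (2 * j) * Kinv ^ (2 * j + k))
       (sc (acoef q \<alpha> n k j * inverse \<kappa> ^ (2 * j + k)) * w q (n - k) k (2 * j))" .
  qed
  also have "(\<Sum>k\<in>{0..n}. \<Sum>j\<in>{0..n-k}. g k j) = (\<Sum>(k, j)\<in>Sigma {0..n} (\<lambda>k. {0..n-k}). g k j)"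
    by (rule sum.Sigma) auto
  also have "\<dots> = (\<Sum>(k, j)\<in>(\<lambda>(k, j). (int k, int j)) ` Sigma {0..n} (\<lambda>k. {0..n-k}). g (nat k) (nat j))"
    by (subst sum.reindex) (auto simp: inj_on_def intro!: sum.cong)
  also have "\<dots> = (\<Sum>(k, j) \<in> Box n. sc (Aco n k j) * Wz n k j)"
  proof (rule sum.mono_neutral_cong_left)
    show "finite (Box n)" by (simp add: Box_def)
    show "(\<lambda>(k, j). (int k, int j)) ` Sigma {0..n} (\<lambda>k. {0..n - k}) \<subseteq> Box n"
      by (auto simp: Box_def)
    show "\<forall>x\<in>Box n - (\<lambda>(k, j). (int k, int j)) ` Sigma {0..n} (\<lambda>k. {0..n - k}). (case x of (k, j) \<Rightarrow> sc (Aco n k j) * Wz n k j) = 0"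
    proof
      fix x assume x: "x \<in> Box n - (\<lambda>(k, j). (int k, int j)) ` Sigma {0..n} (\<lambda>k. {0..n - k})"
      obtain k j where kj: "x = (k, j)" by force
      have "\<not> (0 \<le> k \<and> 0 \<le> j \<and> k + j \<le> int n)"
      proof
        assume h: "0 \<le> k \<and> 0 \<le> j \<and> k + j \<le> int n"
        then have "x = (\<lambda>(k, j). (int k, int j)) (nat k, nat j)" "(nat k, nat j) \<in> Sigma {0..n} (\<lambda>k. {0..n - k})"
          using kj by auto
        then have "x \<in> (\<lambda>(k, j). (int k, int j)) ` Sigma {0..n} (\<lambda>k. {0..n - k})" by (rule image_eqI)
        then show False using x by blast
      qed
      then have "Aco n k j = 0" unfolding Aco_def by (rule if_not_P)
      then show "(case x of (k, j) \<Rightarrow> sc (Aco n k j) * Wz n k j) = 0" using kj by simp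
    qed
    show "\<And>x. x \<in> (\<lambda>(k, j). (int k, int j)) ` Sigma {0..n} (\<lambda>k. {0..n - k}) \<Longrightarrow>
         (case x of (k, j) \<Rightarrow> g (nat k) (nat j)) = (case x of (k, j) \<Rightarrow> sc (Aco n k j) * Wz n k j)"
    proof (clarsimp)
      fix a b assume ab: "a \<le> n" "b \<le> n - a"
      then have "int a + int b \<le> int n" "nat (int n - int a) = n - a" by linarith+
      then show "g a b = sc (Aco n (int a) (int b)) * Wz n (int a) (int b)"
        by (simp add: g_def Aco_def Wz_def nat_mult_distrib nat_add_distrib)
    qed
  qed
  finally show ?thesis unfolding Uz_def .
qed

lemma Kel_Uz: "ev (Kel * Uz n) (sc (inverse q ^ (3 * n) * \<kappa>) * Uz n)"
proof -
  have "Kel * Uz n = (\<Sum>(k, j) \<in> Box n. sc (Aco n k j) * (Kel * Wz n k j))"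
    unfolding Uz_def by (simp add: sum_distrib_left case_prod_unfold sc_lcomm[of Kel])
  also have "ev \<dots> (\<Sum>(k, j) \<in> Box n. sc (Aco n k j) * (sc (inverse q ^ (3 * n) * \<kappa>) * Wz n k j))"
  proof (intro eqV_sum)
    fix x assume "x \<in> Box n"
    obtain k j where kj: "x = (k, j)" by force
    show "ev (case x of (k, j) \<Rightarrow> sc (Aco n k j) * (Kel * Wz n k j))
             (case x of (k, j) \<Rightarrow> sc (Aco n k j) * (sc (inverse q ^ (3 * n) * \<kappa>) * Wz n k j))"
    proof (cases "0 \<le> k \<and> 0 \<le> j \<and> k + j \<le> int n")
      case True
      then have "nat (int n - k) + nat k = n" by linarith
      then have "ev (Kel * Wz n k j) (sc (inverse q ^ (3 * n) * \<kappa>) * Wz n k j)"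
        unfolding Wz_def using WKel[of "nat (int n - k)" "nat k" "nat (2 * j)"] by simp
      then show ?thesis using kj by (simp add: eqV_lmult)
    next
      case False
      then have "Aco n k j = 0" unfolding Aco_def by (rule if_not_P)
      then show ?thesis using kj by simp
    qed
  qed
  also have "\<dots> = sc (inverse q ^ (3 * n) * \<kappa>) * Uz n"
    unfolding Uz_def by (simp add: sum_distrib_left case_prod_unfold sc_mult2 mult.commute)
  finally show ?thesis .
qed

end


section \<open>Critical points\<close>

lemma pow_inj:
  fixes q :: complex
  assumes q0: "q \<noteq> 0" and nr: "\<forall>m::nat. m > 0 \<longrightarrow> q ^ m \<noteq> 1" and e: "q ^ a = q ^ b"
  shows "a = b"
proof (rule ccontr)
  assume "a \<noteq> b"
  then consider "a < b" | "b < a" by linarith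
  then show False
  proof cases
    case 1
    then have "q ^ b = q ^ a * q ^ (b - a)" by (simp add: power_add[symmetric])
    then have "q ^ (b - a) = 1" using e q0 by simp
    then show False using nr 1 by auto
  next
    case 2
    then have "q ^ a = q ^ b * q ^ (a - b)" by (simp add: power_add[symmetric])
    then have "q ^ (a - b) = 1" using e q0 by simp
    then show False using nr 2 by auto
  qed
qed

lemma powi_2nat: "x powi (2 * int a) = x ^ (2 * a)"
proof -
  have "2 * int a = int (2 * a)" by simp
  then show ?thesis by (simp only: power_int_of_nat)
qed

lemma powi_inj:
  fixes q :: complex
  assumes q0: "q \<noteq> 0" and nr: "\<forall>m::nat. m > 0 \<longrightarrow> q ^ m \<noteq> 1"
    and e: "q powi (2 * int a - 3) = q powi (2 * int b - 3)"
  shows "a = b"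
proof -
  have "q powi (2 * int a - 3) * q ^ 3 = q ^ (2 * a)"
    using q0 by (simp add: power_int_diff powi_2nat)
  moreover have "q powi (2 * int b - 3) * q ^ 3 = q ^ (2 * b)"
    using q0 by (simp add: power_int_diff powi_2nat)
  ultimately have "q ^ (2 * a) = q ^ (2 * b)" using e by simp
  then have "2 * a = 2 * b" by (rule pow_inj[OF q0 nr])
  then show ?thesis by simp
qed

lemma hfun_x:
  fixes q :: complex
  assumes "q \<noteq> 0"
  shows "hfun q n \<kappa> c = inverse (q powi (2 * int n - 3)) * \<kappa> + q powi (2 * int n - 3) * inverse \<kappa> - (q - inverse q)\<^sup>2 * c"
proof -
  have "q powi (3 - 2 * int n) = inverse (q powi (2 * int n - 3))"
    using power_int_minus[of q "2 * int n - 3"] by simp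
  then show ?thesis by (simp add: hfun_def)
qed

lemma crit_pair:
  fixes q \<kappa> c :: complex
  assumes q0: "q \<noteq> 0" and k0: "\<kappa> \<noteq> 0"
    and h1: "hfun q n1 \<kappa> c = 0" and h2: "hfun q n2 \<kappa> c = 0"
  shows "q powi (2 * int n1 - 3) = q powi (2 * int n2 - 3) \<or> q powi (2 * int n1 - 3) * q powi (2 * int n2 - 3) = \<kappa>^2"
proof -
  define x1 where "x1 = q powi (2 * int n1 - 3)"
  define x2 where "x2 = q powi (2 * int n2 - 3)"
  have x1: "x1 \<noteq> 0" "x2 \<noteq> 0" using q0 by (simp_all add: x1_def x2_def)
  have E: "(inverse x1 * \<kappa> + x1 * inverse \<kappa>) - (inverse x2 * \<kappa> + x2 * inverse \<kappa>) = 0"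
    using h1 h2 hfun_x[OF q0, of n1 \<kappa> c] hfun_x[OF q0, of n2 \<kappa> c] unfolding x1_def x2_def by simp
  have "(x1 - x2) * (x1 * x2 - \<kappa>^2) = \<kappa> * x1 * x2 * ((inverse x1 * \<kappa> + x1 * inverse \<kappa>) - (inverse x2 * \<kappa> + x2 * inverse \<kappa>))"
    using x1 k0 by (simp add: field_simps power2_eq_square)
  then have "(x1 - x2) * (x1 * x2 - \<kappa>^2) = 0" using E by simp
  then show ?thesis unfolding x1_def[symmetric] x2_def[symmetric] by auto
qed

lemma critset_finite:
  fixes q \<kappa> c :: complex
  assumes q0: "q \<noteq> 0" and nr: "\<forall>m::nat. m > 0 \<longrightarrow> q ^ m \<noteq> 1" and cr: "critical q \<kappa> c"
  shows "finite (critset q \<kappa> c)"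
proof -
  have k0: "\<kappa> \<noteq> 0" using cr by (simp add: critical_def)
  obtain n0 where n0: "n0 \<in> critset q \<kappa> c" using cr by (auto simp: critical_def)
  define S where "S = {n \<in> critset q \<kappa> c. n \<noteq> n0}"
  have S1: "a = b" if "a \<in> S" "b \<in> S" for a b
  proof -
    have h: "hfun q a \<kappa> c = 0" "hfun q b \<kappa> c = 0" "hfun q n0 \<kappa> c = 0" "a \<noteq> n0" "b \<noteq> n0"
      using that n0 by (auto simp: S_def critset_def)
    have na: "q powi (2 * int a - 3) * q powi (2 * int n0 - 3) = \<kappa>^2"
      using crit_pair[OF q0 k0 h(1) h(3)] powi_inj[OF q0 nr] h(4) by blast
    have nb: "q powi (2 * int b - 3) * q powi (2 * int n0 - 3) = \<kappa>^2"
      using crit_pair[OF q0 k0 h(2) h(3)] powi_inj[OF q0 nr] h(5) by blast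
    have "q powi (2 * int n0 - 3) \<noteq> 0" using q0 by simp
    then have "q powi (2 * int a - 3) = q powi (2 * int b - 3)" using na nb by (metis mult_right_cancel)
    then show ?thesis by (rule powi_inj[OF q0 nr])
  qed
  have "finite S"
  proof (cases "S = {}")
    case False
    then obtain a where "a \<in> S" by blast
    then have "S = {a}" using S1 by blast
    then show ?thesis by simp
  qed simp
  moreover have "critset q \<kappa> c \<subseteq> insert n0 S" by (auto simp: S_def)
  ultimately show ?thesis by (meson finite_insert finite_subset)
qed



locale setting2 = setting +
  assumes nr: "\<forall>m::nat. m > 0 \<longrightarrow> q ^ m \<noteq> 1"
begin

abbreviation "G1 n k j \<equiv> co1 (int n - k) k (2 * j)"
abbreviation "G2 n k j \<equiv> co2 (int n - k) k (2 * j)"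
abbreviation "G3 n k j \<equiv> co3 (int n - k) k (2 * j)"
abbreviation "G4 n k j \<equiv> co4 (int n - k) k (2 * j)"
abbreviation "G5 n k j \<equiv> co5 (int n - k) k (2 * j)"
abbreviation "G6 n k j \<equiv> co6 (int n - k) k (2 * j)"

lemma C1Wz:
  assumes "0 \<le> k" "k \<le> int n" "0 \<le> j"
  shows "ev (C1 q * Wz n k j)
    (sc (G1 n k j) * Wz n k j + sc (G2 n k j) * Wz n k (j + 1) + sc (G3 n k j) * Wz n (k + 1) j
     + sc (G4 n k j) * Wz n (k - 1) (j + 1) - sc (G5 n k j) * Wz n (k - 1) j - sc (G6 n k j) * Wz n (k - 1) (j + 2))"
proof -
  have i: "int (nat (int n - k)) = int n - k" "int (nat k) = k" "int (nat (2 * j)) = 2 * j" using assms by auto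
  have w: "w q (nat (int n - k)) (nat k) (nat (2 * j) + 2) = Wz n k (j + 1)"
    "w q (nat (int n - k) - 1) (nat k + 1) (nat (2 * j)) = Wz n (k + 1) j"
    "w q (nat (int n - k) + 1) (nat k - 1) (nat (2 * j) + 2) = Wz n (k - 1) (j + 1)"
    "w q (nat (int n - k) + 1) (nat k - 1) (nat (2 * j)) = Wz n (k - 1) j"
    "w q (nat (int n - k) + 1) (nat k - 1) (nat (2 * j) + 4) = Wz n (k - 1) (j + 2)"
    unfolding Wz_def using assms by (auto intro!: arg_cong3[where f="w q"])
  show ?thesis using C1W[of "nat (int n - k)" "nat k" "nat (2 * j)"] unfolding i w by (simp add: Wz_def)
qed

lemma shift_sum:
  fixes F :: "int \<Rightarrow> int \<Rightarrow> complex" and W :: "int \<Rightarrow> int \<Rightarrow> fa"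
  assumes supp: "\<And>k j. F k j \<noteq> 0 \<Longrightarrow> 0 \<le> k \<and> k \<le> int n \<and> 0 \<le> j \<and> j \<le> int n"
    and d: "\<bar>dk\<bar> \<le> 2" "\<bar>dj\<bar> \<le> 2"
  shows "(\<Sum>(k, j)\<in>Box n. sc (F k j) * W (k + dk) (j + dj)) = (\<Sum>(k, j)\<in>Box n. sc (F (k - dk) (j - dj)) * W k j)"
proof -
  define S where "S = {0 .. int n} \<times> {0 .. int n}"
  have SB: "S \<subseteq> Box n" by (auto simp: S_def Box_def)
  have fB: "finite (Box n)" by (simp add: Box_def)
  have "(\<Sum>(k, j)\<in>Box n. sc (F k j) * W (k + dk) (j + dj)) = (\<Sum>(k, j)\<in>S. sc (F k j) * W (k + dk) (j + dj))"
  proof (rule sum.mono_neutral_right[OF fB SB], intro ballI)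
    fix i assume i: "i \<in> Box n - S"
    obtain k j where kj: "i = (k, j)" by force
    have "F k j = 0" using i kj supp[of k j] by (auto simp: S_def)
    then show "(case i of (k, j) \<Rightarrow> sc (F k j) * W (k + dk) (j + dj)) = 0" using kj by simp
  qed
  also have "\<dots> = (\<Sum>(k, j)\<in>(\<lambda>(k, j). (k + dk, j + dj)) ` S. sc (F (k - dk) (j - dj)) * W k j)"
    by (subst sum.reindex) (auto simp: inj_on_def intro!: sum.cong)
  also have "\<dots> = (\<Sum>(k, j)\<in>Box n. sc (F (k - dk) (j - dj)) * W k j)"
  proof (rule sum.mono_neutral_left[OF fB])
    show "(\<lambda>(k, j). (k + dk, j + dj)) ` S \<subseteq> Box n" using d by (auto simp: S_def Box_def)
    show "\<forall>i\<in>Box n - (\<lambda>(k, j). (k + dk, j + dj)) ` S. (case i of (k, j) \<Rightarrow> sc (F (k - dk) (j - dj)) * W k j) = 0"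
    proof
      fix i assume i: "i \<in> Box n - (\<lambda>(k, j). (k + dk, j + dj)) ` S"
      obtain k j where kj: "i = (k, j)" by force
      have "(k - dk, j - dj) \<notin> S"
      proof
        assume "(k - dk, j - dj) \<in> S"
        then have "i \<in> (\<lambda>(k, j). (k + dk, j + dj)) ` S" using kj by (auto intro: image_eqI[where x="(k - dk, j - dj)"])
        then show False using i by blast
      qed
      then have "F (k - dk) (j - dj) = 0" using supp[of "k - dk" "j - dj"] by (auto simp: S_def)
      then show "(case i of (k, j) \<Rightarrow> sc (F (k - dk) (j - dj)) * W k j) = 0" using kj by simp
    qed
  qed
  finally show ?thesis .
qed

lemma Aco_supp: "Aco n k j \<noteq> 0 \<Longrightarrow> 0 \<le> k \<and> k \<le> int n \<and> 0 \<le> j \<and> j \<le> int n"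
  by (cases "0 \<le> k \<and> 0 \<le> j \<and> k + j \<le> int n") (auto simp: Aco_def)


lemma qint_nz: "qint q (Suc x) \<noteq> 0"
proof
  assume "qint q (Suc x) = 0"
  then have "q ^ Suc x = inverse q ^ Suc x" using D0 by (simp add: qint_def)
  then have "q ^ Suc x * q ^ Suc x = 1" using q0 by (simp add: power_inverse field_simps)
  moreover have "q ^ (2 * Suc x) = q ^ Suc x * q ^ Suc x" by (simp only: mult_2 power_add)
  ultimately have "q ^ (2 * Suc x) = 1" by simp
  moreover have "(2 * Suc x) > 0" by simp
  ultimately show False using nr by blast
qed

lemma qfact_Suc: "qfact q (Suc x) = qfact q x * qint q (Suc x)"
  unfolding qfact_def by (simp add: prod.nat_ivl_Suc' mult.commute)

lemma qfact_nz: "qfact q x \<noteq> 0"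
  by (induction x) (auto simp: qfact_Suc qint_nz, simp add: qfact_def)

definition Ff :: "nat \<Rightarrow> nat \<Rightarrow> nat \<Rightarrow> nat \<Rightarrow> complex" where
  "Ff n x y z = qfact q n / (qfact q x * qfact q y * qfact q z)"

lemma Ff_x: "Ff n x y z = Ff n (Suc x) y z * qint q (Suc x)"
  unfolding Ff_def qfact_Suc using qfact_nz qint_nz by (simp add: field_simps)
lemma Ff_y: "Ff n x y z = Ff n x (Suc y) z * qint q (Suc y)"
  unfolding Ff_def qfact_Suc using qfact_nz qint_nz by (simp add: field_simps)
lemma Ff_z: "Ff n x y z = Ff n x y (Suc z) * qint q (Suc z)"
  unfolding Ff_def qfact_Suc using qfact_nz qint_nz by (simp add: field_simps)

definition Tf :: "nat \<Rightarrow> int \<Rightarrow> int \<Rightarrow> complex" where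
  "Tf n k j = (if 0 \<le> k \<and> 0 \<le> j \<and> k + j \<le> int n then Ff n (nat k) (nat j) (nat (int n - k - j)) else 0)"

definition Nf :: "nat \<Rightarrow> int \<Rightarrow> int \<Rightarrow> complex" where
  "Nf n k j = Ff n (nat (k + 1)) (nat j) (nat (int n - k - j + 1))"

lemma qiz_0[simp]: "qiz q 0 = 0" by (simp add: qiz_def)
lemma qiz_nat: "0 \<le> m \<Longrightarrow> qiz q m = qint q (nat m)"
  by (simp add: qint_qiz)

lemma T1: assumes "-1 \<le> k" "0 \<le> j" "k + j \<le> int n + 1"
  shows "Tf n k j = Nf n k j * qiz q (k + 1) * qiz q (int n - k - j + 1)"
proof (cases "k = -1 \<or> k + j = int n + 1")
  case True
  then have "k + 1 = 0 \<or> int n - k - j + 1 = 0" by auto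
  then show ?thesis using assms by (auto simp: Tf_def)
next
  case False
  then have k: "0 \<le> k" "k + j \<le> int n" using assms by auto
  have e: "nat (k + 1) = Suc (nat k)" "nat (int n - k - j + 1) = Suc (nat (int n - k - j))" using k by auto
  show ?thesis using k assms unfolding Tf_def Nf_def e
    by (simp add: qiz_nat e Ff_x[of n "nat k"] Ff_z[of n _ _ "nat (int n - k - j)"] mult.assoc)
qed


lemma T2: assumes "-1 \<le> k" "0 \<le> j" "k + j \<le> int n + 1"
  shows "Tf n k (j - 1) = Nf n k j * qiz q (k + 1) * qiz q j"
proof (cases "k = -1 \<or> j = 0")
  case True
  then have "k + 1 = 0 \<or> j = 0" by auto
  then show ?thesis using assms by (auto simp: Tf_def)
next
  case False
  then have k: "0 \<le> k" "1 \<le> j" using assms by auto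
  have e: "nat (k + 1) = Suc (nat k)" "nat j = Suc (nat (j - 1))" "nat (int n - k - j + 1) = nat (int n - k - (j - 1))" using k by auto
  show ?thesis using k assms unfolding Tf_def Nf_def e
    by (simp add: qiz_nat e Ff_x[of n "nat k"] Ff_y[of n _ "nat (j - 1)"] mult.assoc)
qed

lemma T3: assumes "-1 \<le> k" "0 \<le> j" "k + j \<le> int n + 1"
  shows "Tf n (k - 1) j = Nf n k j * qiz q k * qiz q (k + 1)"
proof (cases "k \<le> 0")
  case True
  then have "k + 1 = 0 \<or> k = 0" using assms by auto
  then show ?thesis using assms True by (auto simp: Tf_def)
next
  case False
  then have k: "1 \<le> k" using assms by auto
  have e: "nat (k + 1) = Suc (Suc (nat (k - 1)))" "nat k = Suc (nat (k - 1))" "nat (int n - k - j + 1) = nat (int n - (k - 1) - j)" using k by auto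
  show ?thesis using k assms unfolding Tf_def Nf_def e
    by (simp add: qiz_nat e Ff_x[of n "nat (k - 1)"] Ff_x[of n "Suc (nat (k - 1))"] mult.assoc)
qed

lemma T4: assumes "-1 \<le> k" "0 \<le> j" "k + j \<le> int n + 1"
  shows "Tf n (k + 1) (j - 1) = Nf n k j * qiz q j * qiz q (int n - k - j + 1)"
proof (cases "j = 0 \<or> k + j = int n + 1")
  case True
  then have "j = 0 \<or> int n - k - j + 1 = 0" by auto
  then show ?thesis using assms by (auto simp: Tf_def)
next
  case False
  then have k: "1 \<le> j" "k + j \<le> int n" using assms by auto
  define y where "y = nat (j - 1)"
  define z where "z = nat (int n - (k + 1) - (j - 1))"
  have e0: "nat j = Suc y" "nat (int n - k - j + 1) = Suc z" "nat (j - 1) = y" "nat (int n - (k + 1) - (j - 1)) = z"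
    using k by (auto simp: y_def z_def)
  have "qiz q j = qint q (nat j)" "qiz q (int n - k - j + 1) = qint q (nat (int n - k - j + 1))"
    using k by (auto intro!: qiz_nat)
  then have e: "nat j = Suc y" "nat (int n - k - j + 1) = Suc z" "nat (j - 1) = y" "nat (int n - (k + 1) - (j - 1)) = z"
    "qiz q j = qint q (Suc y)" "qiz q (int n - k - j + 1) = qint q (Suc z)"
    using e0 by simp_all
  have "Tf n (k + 1) (j - 1) = Ff n (nat (k + 1)) y z" using k assms unfolding Tf_def e by simp
  also have "\<dots> = Ff n (nat (k + 1)) (Suc y) (Suc z) * qint q (Suc y) * qint q (Suc z)"
    using Ff_y[of n "nat (k + 1)" y z] Ff_z[of n "nat (k + 1)" "Suc y" z] by (simp add: mult.assoc mult.commute mult.left_commute)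
  finally show ?thesis unfolding Nf_def e by (simp add: mult.assoc)
qed

lemma T5: assumes "-1 \<le> k" "0 \<le> j" "k + j \<le> int n + 1"
  shows "Tf n (k + 1) j = Nf n k j * qiz q (int n - k - j + 1) * qiz q (int n - k - j)"
proof (cases "int n \<le> k + j")
  case True
  then have "int n - k - j + 1 = 0 \<or> int n - k - j = 0" using assms by auto
  then show ?thesis using assms True by (auto simp: Tf_def)
next
  case False
  then have k: "k + j \<le> int n - 1" using assms by auto
  have e: "nat (int n - k - j + 1) = Suc (Suc (nat (int n - (k + 1) - j)))" "nat (int n - k - j) = Suc (nat (int n - (k + 1) - j))" using k by auto
  show ?thesis using k assms unfolding Tf_def Nf_def e
    by (simp add: qiz_nat e Ff_z[of n _ _ "nat (int n - (k + 1) - j)"] Ff_z[of n _ _ "Suc (nat (int n - (k + 1) - j))"] mult.assoc)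
qed

lemma T6: assumes "-1 \<le> k" "0 \<le> j" "k + j \<le> int n + 1"
  shows "Tf n (k + 1) (j - 2) = Nf n k j * qiz q j * qiz q (j - 1)"
proof (cases "j \<le> 1")
  case True
  then have "j = 0 \<or> j - 1 = 0" using assms by auto
  then show ?thesis using assms True by (auto simp: Tf_def)
next
  case False
  then have k: "2 \<le> j" using assms by auto
  have e: "nat j = Suc (Suc (nat (j - 2)))" "nat (j - 1) = Suc (nat (j - 2))" "nat (int n - k - j + 1) = nat (int n - (k + 1) - (j - 2))" using k by auto
  show ?thesis using k assms unfolding Tf_def Nf_def e
    by (simp add: qiz_nat e Ff_y[of n _ "nat (j - 2)"] Ff_y[of n _ "Suc (nat (j - 2))"] mult.assoc)
qed


definition ee :: "nat \<Rightarrow> int \<Rightarrow> int \<Rightarrow> int" where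
  "ee n k j = j * (int n - 3) + (k * (2 * int n + 2 * j + k - 7)) div 2"

definition PP where "PP = q^2 - 1"

lemma PP_nz: "PP \<noteq> 0"
proof
  assume "PP = 0"
  then have "q ^ 2 = 1" by (simp add: PP_def)
  then show False using nr by (metis zero_less_numeral)
qed

definition Pf :: "nat \<Rightarrow> int \<Rightarrow> int \<Rightarrow> complex" where
  "Pf n k j = (-1) powi j * \<alpha> powi k * PP powi k * q powi (ee n k j) * \<kappa> powi (- (2 * j + k))"

lemma div2_shift: "(x + 2 * m) div 2 = x div 2 + (m::int)"
  by simp

lemma powi_shift: "(x::complex) \<noteq> 0 \<Longrightarrow> a = b + d \<Longrightarrow> x powi a = x powi b * x powi d"
  by (simp add: power_int_add)

lemma ee2: "ee n k (j - 1) = ee n k j + (3 - int n - k)"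
proof -
  have "k * (2 * int n + 2 * (j - 1) + k - 7) = k * (2 * int n + 2 * j + k - 7) + 2 * (- k)" by (simp add: algebra_simps)
  then show ?thesis unfolding ee_def by (simp only: div2_shift; simp add: algebra_simps)
qed
lemma ee3: "ee n (k - 1) j = ee n k j + (4 - int n - j - k)"
proof -
  have "(k - 1) * (2 * int n + 2 * j + (k - 1) - 7) = k * (2 * int n + 2 * j + k - 7) + 2 * (4 - int n - j - k)" by (simp add: algebra_simps)
  then show ?thesis unfolding ee_def by (simp only: div2_shift; simp add: algebra_simps)
qed
lemma ee4: "ee n (k + 1) (j - 1) = ee n k j + (j - 1)"
proof -
  have "(k + 1) * (2 * int n + 2 * (j - 1) + (k + 1) - 7) = k * (2 * int n + 2 * j + k - 7) + 2 * (int n + j - 4)" by (simp add: algebra_simps)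
  then show ?thesis unfolding ee_def by (simp only: div2_shift; simp add: algebra_simps)
qed
lemma ee5: "ee n (k + 1) j = ee n k j + (int n + j + k - 3)"
proof -
  have "(k + 1) * (2 * int n + 2 * j + (k + 1) - 7) = k * (2 * int n + 2 * j + k - 7) + 2 * (int n + j + k - 3)" by (simp add: algebra_simps)
  then show ?thesis unfolding ee_def by (simp only: div2_shift; simp add: algebra_simps)
qed
lemma ee6: "ee n (k + 1) (j - 2) = ee n k j + (j - int n - k + 1)"
proof -
  have "(k + 1) * (2 * int n + 2 * (j - 2) + (k + 1) - 7) = k * (2 * int n + 2 * j + k - 7) + 2 * (int n + j - 5 - k)" by (simp add: algebra_simps)
  then show ?thesis unfolding ee_def by (simp only: div2_shift; simp add: algebra_simps)
qed

lemma q3: "q powi 3 = q ^ 3" by (simp add: power_int_numeral)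

lemma R2: "Pf n k (j - 1) = Pf n k j * ((-1) * q^3 / (q powi int n * q powi k) * \<kappa>^2)"
proof -
  have a: "(-1::complex) powi (j - 1) = (-1) powi j * (-1)"
    using power_int_diff[of "-1::complex" j 1] by simp
  have b: "q powi (ee n k (j - 1)) = q powi (ee n k j) * q powi (3 - int n - k)" by (rule powi_shift[OF q0 ee2])
  have b2: "q powi (3 - int n - k) = q ^ 3 / (q powi int n * q powi k)" using q0 by (simp add: power_int_diff q3)
  have c: "\<kappa> powi (- (2 * (j - 1) + k)) = \<kappa> powi (- (2 * j + k)) * \<kappa> powi 2" by (rule powi_shift[OF k0]) simp
  show ?thesis unfolding Pf_def a b b2 c by (simp add: algebra_simps)
qed


lemma pw_m1: "(x::complex) \<noteq> 0 \<Longrightarrow> x powi (m - 1) = x powi m / x"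
  using power_int_diff[of x m 1] by simp
lemma pw_p1: "(x::complex) \<noteq> 0 \<Longrightarrow> x powi (m + 1) = x powi m * x"
  using power_int_add[of x m 1] by simp

lemma R3: "Pf n (k - 1) j = Pf n k j * (q^4 / (q powi int n * q powi j * q powi k) * \<kappa> / (\<alpha> * PP))"
proof -
  have b: "q powi (ee n (k - 1) j) = q powi (ee n k j) * q powi (4 - int n - j - k)" by (rule powi_shift[OF q0 ee3])
  have b2: "q powi (4 - int n - j - k) = q ^ 4 / (q powi int n * q powi j * q powi k)" using q0 by (simp add: power_int_diff power_int_numeral)
  have c: "\<kappa> powi (- (2 * j + (k - 1))) = \<kappa> powi (- (2 * j + k)) * \<kappa> powi 1"
    by (rule powi_shift[OF k0]) simp
  show ?thesis unfolding Pf_def b b2 c pw_m1[OF a0] pw_m1[OF PP_nz] using a0 PP_nz by (simp add: field_simps)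
qed

lemma R4: "Pf n (k + 1) (j - 1) = Pf n k j * ((-1) * \<alpha> * PP * q powi j / q * \<kappa>)"
proof -
  have a: "(-1::complex) powi (j - 1) = (-1) powi j * (-1)"
    using power_int_diff[of "-1::complex" j 1] by simp
  have b: "q powi (ee n (k + 1) (j - 1)) = q powi (ee n k j) * q powi (j - 1)" by (rule powi_shift[OF q0 ee4])
  have c: "\<kappa> powi (- (2 * (j - 1) + (k + 1))) = \<kappa> powi (- (2 * j + k)) * \<kappa>"
    using pw_p1[OF k0, of "- (2 * j + k)"] by (simp add: algebra_simps)
  show ?thesis unfolding Pf_def a b c pw_m1[OF q0] pw_p1[OF a0] pw_p1[OF PP_nz] using q0 by (simp add: field_simps)
qed

lemma R5: "Pf n (k + 1) j = Pf n k j * (\<alpha> * PP * q powi int n * q powi j * q powi k / (q^3 * \<kappa>))"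
proof -
  have b: "q powi (ee n (k + 1) j) = q powi (ee n k j) * q powi (int n + j + k - 3)" by (rule powi_shift[OF q0 ee5])
  have b2: "q powi (int n + j + k - 3) = q powi int n * q powi j * q powi k / q ^ 3" using q0 by (simp add: power_int_diff power_int_add power_int_numeral)
  have c: "\<kappa> powi (- (2 * j + (k + 1))) = \<kappa> powi (- (2 * j + k)) * \<kappa> powi (-1)"
    by (rule powi_shift[OF k0]) simp
  show ?thesis unfolding Pf_def b b2 c pw_p1[OF a0] pw_p1[OF PP_nz] using q0 k0 by (simp add: field_simps)
qed

lemma R6: "Pf n (k + 1) (j - 2) = Pf n k j * (\<alpha> * PP * q * q powi j / (q powi int n * q powi k) * \<kappa>^3)"
proof -
  have a: "(-1::complex) powi (j - 2) = (-1) powi j"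
    using power_int_diff[of "-1::complex" j 2] by simp
  have b: "q powi (ee n (k + 1) (j - 2)) = q powi (ee n k j) * q powi (j - int n - k + 1)" by (rule powi_shift[OF q0 ee6])
  have b2: "q powi (j - int n - k + 1) = q * q powi j / (q powi int n * q powi k)" using q0 by (simp add: power_int_diff power_int_add)
  have c: "\<kappa> powi (- (2 * (j - 2) + (k + 1))) = \<kappa> powi (- (2 * j + k)) * \<kappa> powi 3"
    by (rule powi_shift[OF k0]) simp
  show ?thesis unfolding Pf_def a b b2 c pw_p1[OF a0] pw_p1[OF PP_nz] using q0 k0 by (simp add: field_simps power_int_numeral)
qed


lemma qbinom_prod: "k' + j' \<le> n \<Longrightarrow> qbinom q n k' * qbinom q (n - k') j' = Ff n k' j' (n - k' - j')"
  unfolding qbinom_def Ff_def using qfact_nz by (simp add: field_simps)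

lemma AcoPT: "Aco n k j = Pf n k j * Tf n k j"
proof (cases "0 \<le> k \<and> 0 \<le> j \<and> k + j \<le> int n")
  case True
  then obtain k' j' where kj: "k = int k'" "j = int j'" by (metis nonneg_int_cases)
  then have le: "k' + j' \<le> n" using True by simp
  have e1: "nat (int n - int k' - int j') = n - k' - j'" using le by simp
  have e2: "q powi (ee n (int k') (int j')) = q powi (int j' * (int n - 3)) * q powi ((int k' * (2 * int n + 2 * int j' + int k' - 7)) div 2)"
    unfolding ee_def using q0 by (simp add: power_int_add)
  have e3: "\<kappa> powi (- (2 * int j' + int k')) = inverse \<kappa> ^ (2 * j' + k')"
  proof -
    have "- (2 * int j' + int k') = - int (2 * j' + k')" by simp
    then show ?thesis by (simp only: power_int_minus power_int_of_nat power_inverse)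
  qed
  have e4: "(-1::complex) powi int j' = (-1) ^ j'" "\<alpha> powi int k' = \<alpha> ^ k'" "PP powi int k' = (q^2 - 1) ^ k'"
    by (simp_all add: PP_def)
  have P: "Pf n k j = (-1) ^ j' * \<alpha> ^ k' * (q^2 - 1) ^ k' * (q powi (int j' * (int n - 3)) * q powi ((int k' * (2 * int n + 2 * int j' + int k' - 7)) div 2)) * inverse \<kappa> ^ (2 * j' + k')"
    unfolding Pf_def kj e2 e3 e4 by (rule refl)
  have T: "Tf n k j = Ff n k' j' (n - k' - j')" unfolding Tf_def kj using le by (simp add: e1)
  have A: "Aco n k j = acoef q \<alpha> n k' j' * inverse \<kappa> ^ (2 * j' + k')"
    unfolding Aco_def kj using le by (simp add: nat_mult_distrib nat_add_distrib)
  show ?thesis unfolding A P T acoef_def qbinom_prod[OF le, symmetric] by (simp add: mult.assoc mult.left_commute)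
next
  case False
  have "Aco n k j = 0" unfolding Aco_def by (rule if_not_P[OF False])
  moreover have "Tf n k j = 0" unfolding Tf_def by (rule if_not_P[OF False])
  ultimately show ?thesis by simp
qed


lemma qiz_qq: "qiz q m = qq q PP (q powi m)"
proof -
  have "q - inverse q = PP / q" using q0 by (simp add: PP_def field_simps power2_eq_square)
  then show ?thesis unfolding qiz_def qq_def using q0 PP_nz by (simp add: power_int_minus field_simps)
qed

lemma pq_add: "q powi (a + b) = q powi a * q powi b" using q0 by (simp add: power_int_add)
lemma pq_diff: "q powi (a - b) = q powi a / q powi b" using q0 by (simp add: power_int_diff)
lemma pq_2: "q powi (2 * a) = (q powi a) ^ 2"
  by (simp add: power_int_mult power_int_power mult.commute[of 2 a])
lemma pq_nz: "q powi a \<noteq> 0" using q0 by simp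

lemma dd_PP: "1 / dd = q^2 / PP^2"
  using q0 unfolding dd_def PP_def by (simp add: field_simps power2_eq_square)

lemma c_val: "hfun q n \<kappa> c = 0 \<Longrightarrow>
   c = (q^3 * \<kappa> / (q powi int n)^2 + (q powi int n)^2 / (q^3 * \<kappa>)) * (q^2 / PP^2)"
proof -
  assume h: "hfun q n \<kappa> c = 0"
  have "(q - inverse q)^2 * c = q powi (3 - 2 * int n) * \<kappa> + q powi (2 * int n - 3) * inverse \<kappa>"
    using h unfolding hfun_def by simp
  moreover have "q powi (3 - 2 * int n) = q^3 / (q powi int n)^2" "q powi (2 * int n - 3) = (q powi int n)^2 / q^3"
    by (simp_all only: pq_diff pq_2 power_int_numeral)
  ultimately have "c = (q^3 / (q powi int n)^2 * \<kappa> + (q powi int n)^2 / q^3 * inverse \<kappa>) * (1 / dd)"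
    using dd_nz unfolding dd_def by (simp add: field_simps)
  then show ?thesis unfolding dd_PP by (simp add: field_simps)
qed

lemma cn_val: "c_eps q \<kappa> n = (q powi int n / (q^3 * \<kappa>) + q^3 * \<kappa> / q powi int n) * (q^2 / PP^2)"
proof -
  have "q powi (int n - 3) = q powi int n / q^3" "q powi (3 - int n) = q^3 / q powi int n"
    by (simp_all only: pq_diff power_int_numeral)
  then have "c_eps q \<kappa> n = (q powi int n / q^3 * inverse \<kappa> + q^3 / q powi int n * \<kappa>) * (1 / dd)"
    unfolding c_eps_def dd_def by (simp add: field_simps)
  then show ?thesis unfolding dd_PP by (simp add: field_simps)
qed


lemma dd_eq: "dd = PP^2 / q^2"
  using q0 unfolding dd_def PP_def by (simp add: field_simps power2_eq_square)

lemmas pq_split = pq_add pq_diff pq_2 power_int_numeral power_int_1_right power_int_of_nat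

lemma qn_nz: "q ^ n \<noteq> 0" using q0 by simp

lemma qz1: "qiz q (k + 1) = qq q PP (q * q powi k)"
  unfolding qiz_qq by (simp only: pq_split mult.commute)
lemma qz2: "qiz q (int n - k - j + 1) = qq q PP (q * q ^ n / (q powi k * q powi j))"
  unfolding qiz_qq using pq_nz[of k] pq_nz[of j] by (simp only: pq_split) (simp add: field_simps)
lemma qz3: "qiz q (int n - k - j) = qq q PP (q ^ n / (q powi k * q powi j))"
  unfolding qiz_qq using pq_nz[of k] pq_nz[of j] by (simp only: pq_split) (simp add: field_simps)
lemma qz4: "qiz q (j - 1) = qq q PP (q powi j / q)"
  unfolding qiz_qq by (simp only: pq_split)
lemma qz6: "qiz q (int n - k + 1) = qq q PP (q * q ^ n / q powi k)"
  unfolding qiz_qq using pq_nz[of k] by (simp only: pq_split) (simp add: field_simps)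
lemma qz7: "qiz q (int n - (k - 1)) = qq q PP (q * q ^ n / q powi k)"
  unfolding qiz_qq using pq_nz[of k] q0 by (simp only: pq_split) (simp add: field_simps)

lemma G1X: "G1 n k j = q ^ n / (q powi k)^2 * c"
  unfolding co1_def using pq_nz[of k] by (simp only: pq_split) (simp add: field_simps power2_eq_square)

lemma G2X: "G2 n k (j - 1) = inverse \<kappa> * (((q powi k)^2 / (q ^ n * q) - q ^ n / ((q powi k)^2 * q)) * (q^2 / PP^2)
    + qq q PP (q powi k) * qq q PP (q * q ^ n / q powi k))"
proof -
  have e1: "q powi (k - (int n - k) - 1) = (q powi k)^2 / (q ^ n * q)"
    using pq_nz[of k] qn_nz q0 by (simp only: pq_split) (simp add: field_simps power2_eq_square)
  have e2: "q powi (int n - k - k - 1) = q ^ n / ((q powi k)^2 * q)"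
    using pq_nz[of k] qn_nz q0 by (simp only: pq_split) (simp add: field_simps power2_eq_square)
  show ?thesis unfolding co2_def e1 e2 qz6 using dd_PP by (simp add: divide_inverse qiz_qq)
qed

lemma G3X: "G3 n (k - 1) j = \<alpha> * (q powi j)^2 * qq q PP (q * q ^ n / q powi k)"
  unfolding co3_def qz7 by (simp only: pq_2)

lemma G4X: "G4 n (k + 1) (j - 1) = qq q PP (q * q powi k) * (q ^ n / ((q powi k)^2 * (q powi j)^2)) * c / (\<alpha> * \<kappa>)"
proof -
  have e: "q powi (int n - (k + 1) - (k + 1) - 2 * (j - 1)) = q ^ n / ((q powi k)^2 * (q powi j)^2)"
    using pq_nz[of k] pq_nz[of j] qn_nz q0 by (simp only: pq_split) (simp add: field_simps power2_eq_square)
  show ?thesis unfolding co4_def e qz1 ..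
qed

lemma G5X: "G5 n (k + 1) j = qq q PP (q * q powi k) * (q ^ n / (q * (q powi k)^2 * (q powi j)^2)) * (q^2 / PP^2) / \<alpha>"
proof -
  have e: "q powi (int n - (k + 1) - (k + 1) - 2 * j + 1) = q ^ n / (q * (q powi k)^2 * (q powi j)^2)"
    using pq_nz[of k] pq_nz[of j] qn_nz q0 by (simp only: pq_split) (simp add: field_simps power2_eq_square)
  show ?thesis unfolding co5_def e qz1 dd_eq using PP_nz q0 a0 by (simp add: field_simps)
qed

lemma G6X: "G6 n (k + 1) (j - 2) = qq q PP (q * q powi k) * (q * q ^ n / ((q powi k)^2 * (q powi j)^2)) * (q^2 / PP^2) / (\<alpha> * \<kappa>^2)"
proof -
  have e: "q powi (int n - (k + 1) - (k + 1) - 2 * (j - 2) - 1) = q * q ^ n / ((q powi k)^2 * (q powi j)^2)"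
    using pq_nz[of k] pq_nz[of j] qn_nz q0 by (simp only: pq_split) (simp add: field_simps power2_eq_square)
  show ?thesis unfolding co6_def e qz1 dd_eq using PP_nz q0 a0 k0 by (simp add: field_simps)
qed


lemma Aco_zero: "\<not> (0 \<le> k \<and> 0 \<le> j \<and> k + j \<le> int n) \<Longrightarrow> Aco n k j = 0"
  unfolding Aco_def by (rule if_not_P)

lemma pointwise':
  assumes h: "hfun q n \<kappa> c = 0"
  shows "Aco n k j * G1 n k j + Aco n k (j - 1) * G2 n k (j - 1) + Aco n (k - 1) j * G3 n (k - 1) j
    + Aco n (k + 1) (j - 1) * G4 n (k + 1) (j - 1) - Aco n (k + 1) j * G5 n (k + 1) j
    - Aco n (k + 1) (j - 2) * G6 n (k + 1) (j - 2) = c_eps q \<kappa> n * Aco n k j"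
proof (cases "-1 \<le> k \<and> 0 \<le> j \<and> k + j \<le> int n + 1")
  case False
  have z: "Aco n k j = 0" "Aco n k (j - 1) = 0" "Aco n (k - 1) j = 0" "Aco n (k + 1) (j - 1) = 0"
     "Aco n (k + 1) j = 0" "Aco n (k + 1) (j - 2) = 0"
    using False by (auto intro!: Aco_zero)
  show ?thesis unfolding z by simp
next
  case True
  then have R: "-1 \<le> k" "0 \<le> j" "k + j \<le> int n + 1" by auto
  let ?X = "q powi k" and ?Y = "q powi j" and ?Z = "q ^ n"
  let ?P = "Pf n k j * Nf n k j"
  have cv: "c = (q^3 * \<kappa> / ?Z^2 + ?Z^2 / (q^3 * \<kappa>)) * (q^2 / PP^2)"
    using c_val[OF h] by simp
  have cnv: "c_eps q \<kappa> n = (?Z / (q^3 * \<kappa>) + q^3 * \<kappa> / ?Z) * (q^2 / PP^2)"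
    using cn_val[of n] by simp
  have pz: "q powi int n = ?Z" by simp
  have a1: "Aco n k j * G1 n k j = ?P * ((?Z / ?X^2 * c) * 1 * (qq q PP (q*?X) * qq q PP (q*?Z/(?X*?Y))))"
    unfolding AcoPT T1[OF R] G1X qz2 unfolding qz1 by (simp only: mult_1_right mult_1_left mult.assoc mult.commute mult.left_commute)
  have a2: "Aco n k (j - 1) * G2 n k (j - 1) = ?P * ((inverse \<kappa> * ((?X^2/(?Z*q) - ?Z/(?X^2*q)) * (q^2 / PP^2) + qq q PP ?X * qq q PP (q*?Z/?X)))
       * ((-1) * q^3/(?Z*?X) * \<kappa>^2) * (qq q PP (q*?X) * qq q PP ?Y))"
    unfolding AcoPT T2[OF R] G2X qz1 R2 pz qiz_qq[of j] by (simp only: mult_1_right mult_1_left mult.assoc mult.commute mult.left_commute)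
  have a3: "Aco n (k - 1) j * G3 n (k - 1) j = ?P * ((\<alpha> * ?Y^2 * qq q PP (q*?Z/?X)) * (q^4/(?Z*?Y*?X) * \<kappa> / (\<alpha> * PP)) * (qq q PP ?X * qq q PP (q*?X)))"
    unfolding AcoPT T3[OF R] G3X qz1 R3 pz qiz_qq[of k] by (simp only: mult_1_right mult_1_left mult.assoc mult.commute mult.left_commute)
  have a4: "Aco n (k + 1) (j - 1) * G4 n (k + 1) (j - 1) = ?P * ((qq q PP (q*?X) * (?Z/(?X^2*?Y^2)) * c / (\<alpha>*\<kappa>)) * ((-1) * \<alpha> * PP * ?Y / q * \<kappa>) * (qq q PP ?Y * qq q PP (q*?Z/(?X*?Y))))"
    unfolding AcoPT T4[OF R] G4X qz2 R4 pz qiz_qq[of j] by (simp only: mult_1_right mult_1_left mult.assoc mult.commute mult.left_commute)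
  have a5: "Aco n (k + 1) j * G5 n (k + 1) j = ?P * ((qq q PP (q*?X) * (?Z/(q*?X^2*?Y^2)) * (q^2 / PP^2) / \<alpha>) * (\<alpha>*PP*?Z*?Y*?X/(q^3*\<kappa>)) * (qq q PP (q*?Z/(?X*?Y)) * qq q PP (?Z/(?X*?Y))))"
    unfolding AcoPT T5[OF R] G5X qz2 qz3 R5 pz by (simp only: mult_1_right mult_1_left mult.assoc mult.commute mult.left_commute)
  have a6: "Aco n (k + 1) (j - 2) * G6 n (k + 1) (j - 2) = ?P * ((qq q PP (q*?X) * (q*?Z/(?X^2*?Y^2)) * (q^2 / PP^2) / (\<alpha>*\<kappa>^2)) * (\<alpha>*PP*q*?Y/(?Z*?X)*\<kappa>^3) * (qq q PP ?Y * qq q PP (?Y/q)))"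
    unfolding AcoPT T6[OF R] G6X qz4 R6 pz qiz_qq[of j] by (simp only: mult_1_right mult_1_left mult.assoc mult.commute mult.left_commute)
  have a0': "c_eps q \<kappa> n * Aco n k j = ?P * (c_eps q \<kappa> n * (qq q PP (q*?X) * qq q PP (q*?Z/(?X*?Y))))"
    unfolding AcoPT T1[OF R] qz2 unfolding qz1 by (simp only: mult_1_right mult_1_left mult.assoc mult.commute mult.left_commute)
  have B: "(?Z / ?X^2 * c) * 1 * (qq q PP (q*?X) * qq q PP (q*?Z/(?X*?Y)))
    + (inverse \<kappa> * ((?X^2/(?Z*q) - ?Z/(?X^2*q)) * (q^2 / PP^2) + qq q PP ?X * qq q PP (q*?Z/?X))) * ((-1) * q^3/(?Z*?X) * \<kappa>^2) * (qq q PP (q*?X) * qq q PP ?Y)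
    + (\<alpha> * ?Y^2 * qq q PP (q*?Z/?X)) * (q^4/(?Z*?Y*?X) * \<kappa> / (\<alpha> * PP)) * (qq q PP ?X * qq q PP (q*?X))
    + (qq q PP (q*?X) * (?Z/(?X^2*?Y^2)) * c / (\<alpha>*\<kappa>)) * ((-1) * \<alpha> * PP * ?Y / q * \<kappa>) * (qq q PP ?Y * qq q PP (q*?Z/(?X*?Y)))
    - (qq q PP (q*?X) * (?Z/(q*?X^2*?Y^2)) * (q^2 / PP^2) / \<alpha>) * (\<alpha>*PP*?Z*?Y*?X/(q^3*\<kappa>)) * (qq q PP (q*?Z/(?X*?Y)) * qq q PP (?Z/(?X*?Y)))
    - (qq q PP (q*?X) * (q*?Z/(?X^2*?Y^2)) * (q^2 / PP^2) / (\<alpha>*\<kappa>^2)) * (\<alpha>*PP*q*?Y/(?Z*?X)*\<kappa>^3) * (qq q PP ?Y * qq q PP (?Y/q))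
    = c_eps q \<kappa> n * (qq q PP (q*?X) * qq q PP (q*?Z/(?X*?Y)))"
    by (rule bracket[OF q0 PP_nz pq_nz pq_nz qn_nz k0 a0 cv cnv])
  show ?thesis unfolding a1 a2 a3 a4 a5 a6 a0' B[symmetric] by (simp only: distrib_left right_diff_distrib)
qed


lemma pointwise:
  assumes h: "hfun q n \<kappa> c = 0"
  shows "Aco n k j * G1 n k j + Aco n k (j - 1) * G2 n k (j - 1) + Aco n (k - 1) j * G3 n (k - 1) j
    + Aco n (k + 1) (j - 1) * G4 n (k + 1) (j - 1) - Aco n (k + 1) j * G5 n (k + 1) j
    - Aco n (k + 1) (j - 2) * G6 n (k + 1) (j - 2) = c_eps q \<kappa> n * Aco n k j"
  using pointwise'[OF h] .

lemma C1_Uz: "hfun q n \<kappa> c = 0 \<Longrightarrow> ev (C1 q * Uz n) (sc (c_eps q \<kappa> n) * Uz n)"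
proof -
  assume h: "hfun q n \<kappa> c = 0"
  let ?A = "Aco n"
  let ?W = "Wz n"
  have "ev (C1 q * Uz n) (\<Sum>(k, j)\<in>Box n. sc (?A k j) * (C1 q * ?W k j))"
    unfolding Uz_def by (rule eqV_eq) (simp add: sum_distrib_left case_prod_unfold sc_lcomm[of "C1 q"])
  also have "ev \<dots> (\<Sum>(k, j)\<in>Box n. sc (?A k j) *
    (sc (G1 n k j) * ?W k j + sc (G2 n k j) * ?W k (j + 1) + sc (G3 n k j) * ?W (k + 1) j
     + sc (G4 n k j) * ?W (k - 1) (j + 1) - sc (G5 n k j) * ?W (k - 1) j - sc (G6 n k j) * ?W (k - 1) (j + 2)))"
  proof (intro eqV_sum)
    fix x assume "x \<in> Box n"
    obtain k j where kj: "x = (k, j)" by force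
    show "ev (case x of (k, j) \<Rightarrow> sc (?A k j) * (C1 q * ?W k j)) (case x of (k, j) \<Rightarrow> sc (?A k j) *
    (sc (G1 n k j) * ?W k j + sc (G2 n k j) * ?W k (j + 1) + sc (G3 n k j) * ?W (k + 1) j
     + sc (G4 n k j) * ?W (k - 1) (j + 1) - sc (G5 n k j) * ?W (k - 1) j - sc (G6 n k j) * ?W (k - 1) (j + 2)))"
    proof (cases "?A k j = 0")
      case True then show ?thesis using kj by simp
    next
      case False
      have kk: "0 \<le> k" "k \<le> int n" "0 \<le> j" using Aco_supp[OF False] by auto
      show ?thesis unfolding kj prod.case by (rule eqV_lmult[OF C1Wz[OF kk]])
    qed
  qed
  also have "ev \<dots> ((\<Sum>(k, j)\<in>Box n. sc (?A k j * G1 n k j) * ?W (k + 0) (j + 0))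
     + (\<Sum>(k, j)\<in>Box n. sc (?A k j * G2 n k j) * ?W (k + 0) (j + 1))
     + (\<Sum>(k, j)\<in>Box n. sc (?A k j * G3 n k j) * ?W (k + 1) (j + 0))
     + (\<Sum>(k, j)\<in>Box n. sc (?A k j * G4 n k j) * ?W (k + (-1)) (j + 1))
     - (\<Sum>(k, j)\<in>Box n. sc (?A k j * G5 n k j) * ?W (k + (-1)) (j + 0))
     - (\<Sum>(k, j)\<in>Box n. sc (?A k j * G6 n k j) * ?W (k + (-1)) (j + 2)))"
    by (rule eqV_eq) (simp add: case_prod_unfold sum.distrib sum_subtractf algebra_simps sc_mult2)
  also have "ev \<dots> ((\<Sum>(k, j)\<in>Box n. sc (?A (k - 0) (j - 0) * G1 n (k - 0) (j - 0)) * ?W k j)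
     + (\<Sum>(k, j)\<in>Box n. sc (?A (k - 0) (j - 1) * G2 n (k - 0) (j - 1)) * ?W k j)
     + (\<Sum>(k, j)\<in>Box n. sc (?A (k - 1) (j - 0) * G3 n (k - 1) (j - 0)) * ?W k j)
     + (\<Sum>(k, j)\<in>Box n. sc (?A (k - (-1)) (j - 1) * G4 n (k - (-1)) (j - 1)) * ?W k j)
     - (\<Sum>(k, j)\<in>Box n. sc (?A (k - (-1)) (j - 0) * G5 n (k - (-1)) (j - 0)) * ?W k j)
     - (\<Sum>(k, j)\<in>Box n. sc (?A (k - (-1)) (j - 2) * G6 n (k - (-1)) (j - 2)) * ?W k j))"
    by (rule eqV_eq, intro arg_cong2[where f="(+)"] arg_cong2[where f="(-)"] shift_sum) (auto dest: Aco_supp)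
  also have "ev \<dots> (\<Sum>(k, j)\<in>Box n. sc (?A k j * G1 n k j + ?A k (j - 1) * G2 n k (j - 1) + ?A (k - 1) j * G3 n (k - 1) j
    + ?A (k + 1) (j - 1) * G4 n (k + 1) (j - 1) - ?A (k + 1) j * G5 n (k + 1) j
    - ?A (k + 1) (j - 2) * G6 n (k + 1) (j - 2)) * ?W k j)"
    by (rule eqV_eq) (simp add: case_prod_unfold sum.distrib sum_subtractf algebra_simps sc_add[symmetric] sc_diff[symmetric])
  also have "ev \<dots> (\<Sum>(k, j)\<in>Box n. sc (c_eps q \<kappa> n * ?A k j) * ?W k j)"
    by (rule eqV_eq) (simp only: pointwise[OF h])
  also have "ev \<dots> (sc (c_eps q \<kappa> n) * Uz n)"
    unfolding Uz_def by (rule eqV_eq) (simp add: sum_distrib_left case_prod_unfold sc_mult2)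
  finally show ?thesis .
qed

lemma main_K: "ev (Kel * u01 q \<alpha> n) (sc (kappa_eps q \<kappa> n) * u01 q \<alpha> n)"
proof -
  have "ev (Kel * u01 q \<alpha> n) (Kel * Uz n)" by (intro eqV_lmult U1)
  also have "ev \<dots> (sc (inverse q ^ (3 * n) * \<kappa>) * Uz n)" by (rule Kel_Uz)
  also have "ev \<dots> (sc (inverse q ^ (3 * n) * \<kappa>) * u01 q \<alpha> n)" by (rule eqV_lmult[OF eqV_sym[OF U1]])
  also have "inverse q ^ (3 * n) * \<kappa> = kappa_eps q \<kappa> n"
  proof -
    have "- 3 * int n = - int (3 * n)" by simp
    then have "q powi (- 3 * int n) = inverse (q ^ (3 * n))" by (simp only: power_int_minus power_int_of_nat)
    then show ?thesis by (simp add: kappa_eps_def power_inverse)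
  qed
  finally show ?thesis .
qed

lemma main_C: "hfun q n \<kappa> c = 0 \<Longrightarrow> ev (C1 q * u01 q \<alpha> n) (sc (c_eps q \<kappa> n) * u01 q \<alpha> n)"
proof -
  assume h: "hfun q n \<kappa> c = 0"
  have "ev (C1 q * u01 q \<alpha> n) (C1 q * Uz n)" by (intro eqV_lmult U1)
  also have "ev \<dots> (sc (c_eps q \<kappa> n) * Uz n)" by (rule C1_Uz[OF h])
  also have "ev \<dots> (sc (c_eps q \<kappa> n) * u01 q \<alpha> n)" by (rule eqV_lmult[OF eqV_sym[OF U1]])
  finally show ?thesis .
qed

end

theorem corollary5p3:
  fixes q \<alpha> \<kappa> c :: complex
  assumes "q \<noteq> 0" and "\<forall>m::nat. m > 0 \<longrightarrow> q ^ m \<noteq> 1"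
    and "\<alpha> \<noteq> 0"
    and "critical q \<kappa> c"
  shows "\<forall>m \<in> {nplus q \<kappa> c, nminus q \<kappa> c}.
           eqV q \<alpha> \<kappa> c (Kel * u01 q \<alpha> m) (sc (kappa_eps q \<kappa> m) * u01 q \<alpha> m)
         \<and> eqV q \<alpha> \<kappa> c (C1 q * u01 q \<alpha> m) (sc (c_eps q \<kappa> m) * u01 q \<alpha> m)"
proof -
  have q0: "q \<noteq> 0" and nr: "\<forall>m::nat. m > 0 \<longrightarrow> q ^ m \<noteq> 1" and a0: "\<alpha> \<noteq> 0" and cr: "critical q \<kappa> c"
    using assms by auto
  have k0: "\<kappa> \<noteq> 0" using cr by (simp add: critical_def)
  have "q ^ 2 \<noteq> 1" using nr by auto
  then have D0: "q - inverse q \<noteq> 0" using q0 by (auto simp: power2_eq_square field_simps)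
  interpret S: setting2 q \<alpha> \<kappa> c using q0 D0 a0 k0 nr by unfold_locales auto
  have fin: "finite (critset q \<kappa> c)" by (rule critset_finite[OF q0 nr cr])
  have ne: "critset q \<kappa> c \<noteq> {}" using cr by (simp add: critical_def)
  have "nplus q \<kappa> c \<in> critset q \<kappa> c" unfolding nplus_def using fin ne by (rule Max_in)
  moreover have "nminus q \<kappa> c \<in> critset q \<kappa> c" unfolding nminus_def using fin ne by (rule Min_in)
  ultimately have "\<forall>m \<in> {nplus q \<kappa> c, nminus q \<kappa> c}. hfun q m \<kappa> c = 0" by (auto simp: critset_def)
  then show ?thesis using S.main_K S.main_C by blast
qed

end
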